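(* For all integers $n\ge0$, $\overline{bt}(16n)\equiv\overline{bt}(8n)\pmod{64}$; consequently, for all $n,\alpha\ge 0$, $\overline{bt}(2^{\alpha+3}n)\equiv \overline{bt}(8n)\pmod{64}$.
   Context: For $|q|<1$ and a positive integer $k$ let $f_k:=\prod_{m=1}^\infty(1-q^{mk})$. The function $\overline{bt}(n)$ is defined by $\sum_{n\ge0}\overline{bt}(n)q^n=\frac{f_4^3}{f_1^6f_2^3}$. *)

theory Defs
  imports "HOL-Computational_Algebra.Formal_Power_Series"
begin

text \<open>The q-Pochhammer-type product f_k = prod_{m>=1} (1 - q^(mk)) as a formal power series.
  Its n-th coefficient agrees with that of the finite product over 1 <= m <= n (k >= 1),
  since the remaining factors are 1 + O(q^(n+1)).\<close>
definition fk :: "nat \<Rightarrow> rat fps" where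
  "fk k = Abs_fps (\<lambda>n. fps_nth (\<Prod>m\<in>{1..n}. (1 - fps_X ^ (m * k))) n)"

definition btbar_gf :: "rat fps" where
  "btbar_gf = fk 4 ^ 3 * inverse (fk 1 ^ 6 * fk 2 ^ 3)"

definition btbar :: "nat \<Rightarrow> rat" where
  "btbar n = fps_nth btbar_gf n"

end

theory Submission
  imports Defs
begin

unbundle fps_syntax


definition meq :: "nat \<Rightarrow> rat fps \<Rightarrow> rat fps \<Rightarrow> bool" where
  "meq m f g \<longleftrightarrow> fps_X ^ m dvd (f - g)"

lemma meq_nth: "meq m f g \<Longrightarrow> i < m \<Longrightarrow> f $ i = g $ i"
proof -
  assume "meq m f g" "i < m"
  then obtain h where "f - g = fps_X ^ m * h" unfolding meq_def by (auto elim: dvdE)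
  then have "(f - g) $ i = 0" using \<open>i < m\<close> by (simp add: fps_X_power_mult_nth)
  then show ?thesis by simp
qed

lemma meqI: assumes "\<And>i. i < m \<Longrightarrow> f $ i = g $ i" shows "meq m f g"
proof (cases "f - g = 0")
  case True then show ?thesis by (simp add: meq_def)
next
  case False
  have "m \<le> subdegree (f - g)" using False assms by (intro subdegree_geI) auto
  then have "f - g = fps_shift m (f - g) * fps_X ^ m" by (rule subdegree_decompose')
  then show ?thesis unfolding meq_def by (metis dvd_triv_right)
qed

lemma meq_refl[simp]: "meq m f f" by (simp add: meq_def)
lemma meq_sym: "meq m f g \<Longrightarrow> meq m g f"
  unfolding meq_def by (subst dvd_minus_iff[symmetric]) simp
lemma meq_trans: "meq m f g \<Longrightarrow> meq m g h \<Longrightarrow> meq m f h"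
proof -
  assume "meq m f g" "meq m g h"
  then have "fps_X ^ m dvd ((f - g) + (g - h))" unfolding meq_def by (rule dvd_add)
  then show ?thesis unfolding meq_def by simp
qed
lemma meq_add: "meq m f g \<Longrightarrow> meq m f' g' \<Longrightarrow> meq m (f + f') (g + g')"
proof -
  assume "meq m f g" "meq m f' g'"
  then have "fps_X ^ m dvd ((f - g) + (f' - g'))" unfolding meq_def by (rule dvd_add)
  then show ?thesis unfolding meq_def by (simp add: algebra_simps)
qed
lemma meq_diff: "meq m f g \<Longrightarrow> meq m f' g' \<Longrightarrow> meq m (f - f') (g - g')"
proof -
  assume "meq m f g" "meq m f' g'"
  then have "fps_X ^ m dvd ((f - g) - (f' - g'))" unfolding meq_def by (rule dvd_diff)
  then show ?thesis unfolding meq_def by (simp add: algebra_simps)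
qed
lemma meq_mult: "meq m f g \<Longrightarrow> meq m f' g' \<Longrightarrow> meq m (f * f') (g * g')"
proof -
  assume a: "meq m f g" "meq m f' g'"
  have "f * f' - g * g' = (f - g) * f' + g * (f' - g')" by (simp add: algebra_simps)
  moreover have "fps_X ^ m dvd ((f - g) * f' + g * (f' - g'))"
    using a unfolding meq_def by (intro dvd_add dvd_mult dvd_mult2)
  ultimately show ?thesis unfolding meq_def by simp
qed
lemma meq_mono: "meq m f g \<Longrightarrow> k \<le> m \<Longrightarrow> meq k f g"
  unfolding meq_def using le_imp_power_dvd dvd_trans by blast
lemma meq_shift: "meq m f g \<Longrightarrow> meq (m + j) (fps_X ^ j * f) (fps_X ^ j * g)"
proof -
  assume "meq m f g"
  then have "fps_X ^ j * fps_X ^ m dvd fps_X ^ j * (f - g)" unfolding meq_def by (rule mult_dvd_mono[OF dvd_refl])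
  moreover have "fps_X ^ j * f - fps_X ^ j * g = fps_X ^ j * (f - g)" by (simp add: right_diff_distrib)
  moreover have "fps_X ^ (m + j) = fps_X ^ j * (fps_X ^ m :: rat fps)" by (simp add: power_add mult.commute)
  ultimately show ?thesis unfolding meq_def by simp
qed
lemma meq_inverse:
  assumes "meq m f g" "f $ 0 \<noteq> 0" "g $ 0 \<noteq> 0"
  shows "meq m (inverse f) (inverse g)"
proof -
  have "inverse f - inverse g = inverse f * inverse g * (g - f)"
    using assms by (simp add: algebra_simps inverse_mult_eq_1 inverse_mult_eq_1')
  moreover have "fps_X ^ m dvd inverse f * inverse g * (g - f)"
    using assms(1) unfolding meq_def by (intro dvd_mult) (subst dvd_minus_iff[symmetric], simp)
  ultimately show ?thesis unfolding meq_def by simp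
qed
lemma meq_sum: "(\<And>x. x \<in> A \<Longrightarrow> meq m (f x) (g x)) \<Longrightarrow> meq m (sum f A) (sum g A)"
  by (induction A rule: infinite_finite_induct) (auto intro: meq_add)
lemma meq_prod: "(\<And>x. x \<in> A \<Longrightarrow> meq m (f x) (g x)) \<Longrightarrow> meq m (prod f A) (prod g A)"
  by (induction A rule: infinite_finite_induct) (auto intro: meq_mult)
lemma meq_eq: assumes "\<And>m. meq m f g" shows "f = g"
proof (rule fps_ext)
  fix n show "f $ n = g $ n" using assms[of "Suc n"] by (auto intro: meq_nth)
qed
lemma meq_Xpow: "k \<ge> m \<Longrightarrow> meq m (fps_X ^ k * f) 0"
  unfolding meq_def by (simp add: le_imp_power_dvd dvd_mult2)


definition dil :: "rat fps \<Rightarrow> rat fps" where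
  "dil f = Abs_fps (\<lambda>n. if even n then f $ (n div 2) else 0)"

definition U2 :: "rat fps \<Rightarrow> rat fps" where
  "U2 f = Abs_fps (\<lambda>n. f $ (2 * n))"

lemma dil_nth: "dil f $ n = (if even n then f $ (n div 2) else 0)"
  by (simp add: dil_def)
lemma U2_nth: "U2 f $ n = f $ (2 * n)"
  by (simp add: U2_def)

lemma sum_even_half:
  fixes h :: "nat \<Rightarrow> rat"
  shows "(\<Sum>i=0..2*m. if even i then h i else 0) = (\<Sum>j=0..m. h (2*j))"
proof -
  have "(\<Sum>i=0..2*m. if even i then h i else 0) = (\<Sum>i\<in>(\<lambda>j. 2*j) ` {0..m}. if even i then h i else 0)"
    by (rule sum.mono_neutral_right) auto
  also have "\<dots> = (\<Sum>j=0..m. h (2*j))"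
    by (subst sum.reindex) (auto simp: inj_on_def)
  finally show ?thesis .
qed

lemma dil_mult: "dil (f * g) = dil f * dil g"
proof (rule fps_ext)
  fix n
  show "dil (f * g) $ n = (dil f * dil g) $ n"
  proof (cases "even n")
    case True
    then obtain m where n: "n = 2 * m" by blast
    have "(dil f * dil g) $ n = (\<Sum>i=0..2*m. if even i then f $ (i div 2) * g $ (m - i div 2) else 0)"
      unfolding fps_mult_nth n dil_nth
      by (intro sum.cong) (auto simp: diff_mult_distrib2[symmetric] elim!: evenE)
    also have "\<dots> = (\<Sum>j=0..m. f $ j * g $ (m - j))"
      by (subst sum_even_half) simp
    finally show ?thesis by (simp add: dil_nth n fps_mult_nth)
  next
    case False
    have "(dil f * dil g) $ n = 0"
      unfolding fps_mult_nth dil_nth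
      by (intro sum.neutral) (use False in auto)
    then show ?thesis using False by (simp add: dil_nth)
  qed
qed

lemma dil_add: "dil (f + g) = dil f + dil g"
  by (rule fps_ext) (simp add: dil_nth)
lemma dil_diff: "dil (f - g) = dil f - dil g"
  by (rule fps_ext) (simp add: dil_nth)
lemma dil_minus: "dil (- f) = - dil f"
  by (rule fps_ext) (simp add: dil_nth)
lemma dil_const: "dil (fps_const c) = fps_const c"
  by (rule fps_ext) (auto simp: dil_nth elim: oddE)
lemma dil_1: "dil 1 = 1"
  using dil_const[of 1] by simp
lemma dil_0: "dil 0 = 0"
  using dil_const[of 0] by simp
lemma dil_numeral: "dil (numeral k) = numeral k"
  using dil_const[of "numeral k"] by (simp add: numeral_fps_const)
lemma dil_power: "dil (f ^ k) = dil f ^ k"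
  by (induction k) (simp_all add: dil_1 dil_mult)
lemma dil_prod: "dil (prod f A) = (\<Prod>x\<in>A. dil (f x))"
  by (induction A rule: infinite_finite_induct) (simp_all add: dil_1 dil_mult)
lemma dil_X: "dil fps_X = fps_X ^ 2"
proof (rule fps_ext)
  fix n :: nat
  show "dil fps_X $ n = (fps_X ^ 2) $ n"
    by (cases "even n") (auto simp: dil_nth fps_X_nth fps_X_power_nth elim!: evenE)
qed
lemma dil_X_power: "dil (fps_X ^ j) = fps_X ^ (2 * j)"
  by (simp add: dil_power dil_X power_mult)
lemma dil_inverse: assumes "f $ 0 \<noteq> 0" shows "dil (inverse f) = inverse (dil f)"
proof -
  have "dil f * dil (inverse f) = 1"
    using assms by (simp add: dil_mult[symmetric] dil_1 inverse_mult_eq_1')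
  then show ?thesis by (rule fps_inverse_unique[symmetric])
qed
lemma dil_meq: assumes "meq m f g" shows "meq m (dil f) (dil g)"
proof -
  obtain h where "f - g = fps_X ^ m * h" using assms unfolding meq_def by (auto elim: dvdE)
  then have "dil f - dil g = fps_X ^ (2*m) * dil h"
    by (simp add: dil_diff[symmetric] dil_mult dil_X_power)
  then have "meq (2*m) (dil f) (dil g)" unfolding meq_def by simp
  then show ?thesis by (rule meq_mono) simp
qed

lemma U2_add: "U2 (f + g) = U2 f + U2 g"
  by (rule fps_ext) (simp add: U2_nth)
lemma U2_diff: "U2 (f - g) = U2 f - U2 g"
  by (rule fps_ext) (simp add: U2_nth)
lemma U2_dil_mult: "U2 (dil a * b) = a * U2 b"
proof (rule fps_ext)
  fix n
  have "U2 (dil a * b) $ n = (\<Sum>i=0..2*n. if even i then a $ (i div 2) * b $ (2*n - i) else 0)"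
    unfolding U2_nth fps_mult_nth dil_nth by (intro sum.cong) auto
  also have "\<dots> = (\<Sum>j=0..n. a $ j * b $ (2*n - 2*j))"
    by (subst sum_even_half) simp
  also have "\<dots> = (a * U2 b) $ n"
    unfolding fps_mult_nth U2_nth by (intro sum.cong) (auto simp: right_diff_distrib')
  finally show "U2 (dil a * b) $ n = (a * U2 b) $ n" .
qed
lemma U2_dil: "U2 (dil a) = a"
proof -
  have "U2 1 = 1" by (rule fps_ext) (simp add: U2_nth fps_one_nth)
  then show ?thesis using U2_dil_mult[of a 1] by simp
qed

definition gen :: "'b set \<Rightarrow> ('b \<Rightarrow> nat) \<Rightarrow> rat fps" where
  "gen A w = Abs_fps (\<lambda>n. of_nat (card {x\<in>A. w x = n}))"

definition ff :: "'b set \<Rightarrow> ('b \<Rightarrow> nat) \<Rightarrow> bool" where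
  "ff A w \<longleftrightarrow> (\<forall>n. finite {x\<in>A. w x = n})"

lemma gen_nth: "gen A w $ n = of_nat (card {x\<in>A. w x = n})"
  by (simp add: gen_def)

lemma dil_gen: "dil (gen A w) = gen A (\<lambda>x. 2 * w x)"
proof (rule fps_ext)
  fix n
  show "dil (gen A w) $ n = gen A (\<lambda>x. 2 * w x) $ n"
  proof (cases "even n")
    case True
    then have "{x\<in>A. w x = n div 2} = {x\<in>A. 2 * w x = n}" by auto
    then show ?thesis using True by (simp add: dil_nth gen_nth)
  next
    case False
    then have "{x\<in>A. 2 * w x = n} = {}" by auto
    then have "gen A (\<lambda>x. 2 * w x) $ n = 0" by (simp only: gen_nth card.empty)
    then show ?thesis using False by (simp add: dil_nth)
  qed
qed

lemma gen_union:
  assumes "A \<inter> B = {}" "ff A w" "ff B w"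
  shows "gen (A \<union> B) w = gen A w + gen B w"
proof (rule fps_ext)
  fix n
  have "{x\<in>A \<union> B. w x = n} = {x\<in>A. w x = n} \<union> {x\<in>B. w x = n}" by auto
  moreover have "card ({x\<in>A. w x = n} \<union> {x\<in>B. w x = n}) = card {x\<in>A. w x = n} + card {x\<in>B. w x = n}"
    using assms by (intro card_Un_disjoint) (auto simp: ff_def)
  ultimately show "gen (A \<union> B) w $ n = (gen A w + gen B w) $ n" by (simp add: gen_nth)
qed

lemma gen_reindex:
  assumes "bij_betw h A B" "\<And>x. x \<in> A \<Longrightarrow> w' (h x) = w x"
  shows "gen A w = gen B w'"
proof (rule fps_ext)
  fix n
  have inj: "inj_on h {x\<in>A. w x = n}" using assms(1) unfolding bij_betw_def by (auto intro: inj_on_subset)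
  have "h ` {x\<in>A. w x = n} = {y\<in>B. w' y = n}"
  proof
    show "h ` {x\<in>A. w x = n} \<subseteq> {y\<in>B. w' y = n}" using assms by (auto simp: bij_betw_def)
    show "{y\<in>B. w' y = n} \<subseteq> h ` {x\<in>A. w x = n}"
    proof
      fix y assume y: "y \<in> {y\<in>B. w' y = n}"
      then obtain x where "x \<in> A" "y = h x" using assms(1) unfolding bij_betw_def by auto
      then show "y \<in> h ` {x\<in>A. w x = n}" using y assms(2) by auto
    qed
  qed
  then have "card {y\<in>B. w' y = n} = card {x\<in>A. w x = n}" using card_image[OF inj] by simp
  then show "gen A w $ n = gen B w' $ n" by (simp add: gen_nth)
qed

lemma gen_single: assumes "w a = 0" shows "gen {a} w = 1"
proof (rule fps_ext)
  fix n
  show "gen {a} w $ n = 1 $ n"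
  proof (cases "n = 0")
    case True
    then have "{x\<in>{a}. w x = n} = {a}" using assms by auto
    then show ?thesis using True by (simp add: gen_nth)
  next
    case False
    then have "{x\<in>{a}. w x = n} = {}" using assms by auto
    then show ?thesis using False by (simp add: gen_nth)
  qed
qed

lemma gen_mult:
  assumes "ff A w" "ff B v"
  shows "gen A w * gen B v = gen (A \<times> B) (\<lambda>(a,b). w a + v b)"
proof (rule fps_ext)
  fix n
  let ?S = "\<lambda>i. {x\<in>A. w x = i} \<times> {y\<in>B. v y = n - i}"
  have eq: "{p\<in>A \<times> B. (\<lambda>(a,b). w a + v b) p = n} = (\<Union>i\<in>{0..n}. ?S i)" by auto
  have fin: "\<And>i. finite (?S i)" using assms by (auto simp: ff_def)
  have "card (\<Union>i\<in>{0..n}. ?S i) = (\<Sum>i=0..n. card (?S i))"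
    by (rule card_UN_disjoint) (use fin in auto)
  then have "card {p\<in>A \<times> B. (\<lambda>(a,b). w a + v b) p = n} = (\<Sum>i=0..n. card {x\<in>A. w x = i} * card {y\<in>B. v y = n - i})"
    by (simp add: eq card_cartesian_product)
  then show "(gen A w * gen B v) $ n = gen (A \<times> B) (\<lambda>(a,b). w a + v b) $ n"
    by (simp add: gen_nth fps_mult_nth)
qed

lemma ff_prod: "ff A w \<Longrightarrow> ff B v \<Longrightarrow> ff (A \<times> B) (\<lambda>(a,b). w a + v b)"
proof -
  assume a: "ff A w" "ff B v"
  show ?thesis unfolding ff_def
  proof
    fix n
    have "{p\<in>A \<times> B. (\<lambda>(a,b). w a + v b) p = n} \<subseteq> {x\<in>A. w x \<le> n} \<times> {y\<in>B. v y \<le> n}" by auto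
    moreover have "finite {x\<in>A. w x \<le> n}"
    proof -
      have "{x\<in>A. w x \<le> n} = (\<Union>i\<in>{..n}. {x\<in>A. w x = i})" by auto
      then show ?thesis using a by (simp add: ff_def)
    qed
    moreover have "finite {y\<in>B. v y \<le> n}"
    proof -
      have "{y\<in>B. v y \<le> n} = (\<Union>i\<in>{..n}. {y\<in>B. v y = i})" by auto
      then show ?thesis using a by (simp add: ff_def)
    qed
    ultimately show "finite {p\<in>A \<times> B. (\<lambda>(a,b). w a + v b) p = n}"
      by (meson finite_SigmaI finite_subset)
  qed
qed

lemma ff_int: assumes "\<And>x. x \<in> A \<Longrightarrow> \<bar>x\<bar> \<le> int (w x)" shows "ff (A::int set) w"
  unfolding ff_def
proof
  fix n
  have "{x\<in>A. w x = n} \<subseteq> {-int n..int n}"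
  proof
    fix x assume "x \<in> {x\<in>A. w x = n}"
    then have "\<bar>x\<bar> \<le> int n" using assms by auto
    then show "x \<in> {-int n..int n}" by (simp add: abs_le_iff)
  qed
  then show "finite {x\<in>A. w x = n}" by (rule finite_subset) simp
qed

lemma gen_trunc:
  assumes "finite {x\<in>A. w x < m}"
  shows "meq m (gen A w) (\<Sum>x\<in>{x\<in>A. w x < m}. fps_X ^ (w x))"
proof (rule meqI)
  fix i assume i: "i < m"
  have "(\<Sum>x\<in>{x\<in>A. w x < m}. fps_X ^ (w x)) $ i = (\<Sum>x\<in>{x\<in>A. w x < m}. if w x = i then 1 else (0::rat))"
    by (simp add: fps_sum_nth) (intro sum.cong, auto)
  also have "\<dots> = of_nat (card {x\<in>{x\<in>A. w x < m}. w x = i})"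
    using assms by (simp add: sum.If_cases Int_def conj_commute)
  also have "{x\<in>{x\<in>A. w x < m}. w x = i} = {x\<in>A. w x = i}" using i by auto
  finally show "gen A w $ i = (\<Sum>x\<in>{x\<in>A. w x < m}. fps_X ^ (w x)) $ i" by (simp add: gen_nth)
qed


lemma absq: "\<bar>x::int\<bar> \<le> x^2"
proof (cases "x = 0")
  case False
  then have "1 \<le> \<bar>x\<bar>" by simp
  then have "\<bar>x\<bar> * 1 \<le> \<bar>x\<bar> * \<bar>x\<bar>" by (intro mult_left_mono) auto
  then show ?thesis by (simp add: power2_eq_square abs_mult_self_eq)
qed simp

lemma ff_sq: assumes "c > 0" shows "ff (A::int set) (\<lambda>k. c * nat (k^2))"
proof (rule ff_int)
  fix x :: int
  have "\<bar>x\<bar> \<le> int (nat (x^2))" using absq[of x] by simp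
  also have "\<dots> \<le> int (c * nat (x^2))"
  proof -
    have "nat (x^2) \<le> c * nat (x^2)" using assms by (cases c) auto
    then show ?thesis by (rule of_nat_mono)
  qed
  finally show "\<bar>x\<bar> \<le> int (c * nat (x^2))" .
qed

lemma ff_sq1: "ff (A::int set) (\<lambda>k. nat (k^2))"
  using ff_sq[of 1 A] by simp

definition sq :: "rat fps" where "sq = gen {k::int. 0 < k} (\<lambda>k. nat (k^2))"
definition th :: "rat fps" where "th = gen (UNIV::int set) (\<lambda>k. nat (k^2))"
definition od :: "rat fps" where "od = sq - dil (dil sq)"
definition Th :: "rat fps" where
  "Th = gen {k::int. even k} (\<lambda>k. nat (k^2)) - gen {k::int. odd k} (\<lambda>k. nat (k^2))"

lemma bij_neg_pos: "bij_betw uminus {k::int. k < 0} {k. 0 < k}"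
  by (rule bij_betw_byWitness[where f' = uminus]) auto
lemma bij_neg_pos_odd: "bij_betw uminus {k::int. k < 0 \<and> odd k} {k. 0 < k \<and> odd k}"
  by (rule bij_betw_byWitness[where f' = uminus]) auto
lemma bij_dbl_pos: "bij_betw (\<lambda>k::int. 2 * k) {k. 0 < k} {k. 0 < k \<and> even k}"
  by (rule bij_betw_byWitness[where f' = "\<lambda>k. k div 2"]) auto
lemma bij_half: "bij_betw (\<lambda>k::int. k div 2) {k. even k} UNIV"
  by (rule bij_betw_byWitness[where f' = "\<lambda>k. 2 * k"]) auto
lemma half_w: "even (k::int) \<Longrightarrow> 2 * (2 * nat ((k div 2)^2)) = nat (k^2)"
  by (auto elim!: evenE simp: power_mult_distrib nat_mult_distrib)


lemma t1: "(UNIV::int set) = {0} \<union> ({k. 0 < k} \<union> {k. k < 0})" by auto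
lemma t2: "gen {k::int. k < 0} (\<lambda>k::int. nat (k^2)) = sq"
    unfolding sq_def by (rule gen_reindex[OF bij_neg_pos]) simp
lemma t3: "{0::int} \<inter> ({k. 0 < k} \<union> {k. k < 0}) = {}" by auto
lemma t4: "gen {0} (\<lambda>k::int. nat (k^2)) = 1" by (rule gen_single) simp
lemma t5: "{k::int. 0 < k} \<inter> {k. k < 0} = {}" by auto
lemma e1: "gen ({0} \<union> ({k. 0 < k} \<union> {k. k < 0})) (\<lambda>k::int. nat (k^2)) = gen {0} (\<lambda>k::int. nat (k^2)) + gen ({k. 0 < k} \<union> {k. k < 0}) (\<lambda>k::int. nat (k^2))"
    by (rule gen_union[OF t3 ff_sq1 ff_sq1])
lemma e2: "gen ({k. 0 < k} \<union> {k. k < 0}) (\<lambda>k::int. nat (k^2)) = gen {k. 0 < k} (\<lambda>k::int. nat (k^2)) + gen {k. k < 0} (\<lambda>k::int. nat (k^2))"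
    by (rule gen_union[OF t5 ff_sq1 ff_sq1])
lemma e0: "th = gen ({0} \<union> ({k. 0 < k} \<union> {k. k < 0})) (\<lambda>k::int. nat (k^2))"
  unfolding th_def by (simp only: t1[symmetric])
lemma th_sq: "th = 1 + 2 * sq"
proof -
  have "th = gen {0} (\<lambda>k::int. nat (k^2)) + (gen {k. 0 < k} (\<lambda>k::int. nat (k^2)) + gen {k. k < 0} (\<lambda>k::int. nat (k^2)))"
    unfolding e0 e1 e2 ..
  also have "\<dots> = 1 + (sq + sq)"
    by (simp only: t4 t2 sq_def[symmetric])
  also have "\<dots> = 1 + 2 * sq"
    by (simp only: mult_2)
  finally show ?thesis .
qed
lemma nat_4sq: "nat ((2 * k)^2) = 2 * (2 * nat ((k::int)^2))"
  by (simp add: power_mult_distrib nat_mult_distrib)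

lemma od_gen: "od = gen {k::int. 0 < k \<and> odd k} (\<lambda>k. nat (k^2))"
proof -
  have U: "{k::int. 0 < k \<and> even k} \<union> {k. 0 < k \<and> odd k} = {k::int. 0 < k}" by auto
  have d: "{k::int. 0 < k \<and> even k} \<inter> {k. 0 < k \<and> odd k} = {}" by auto
  have e1: "dil (dil sq) = gen {k::int. 0 < k} (\<lambda>k. 2 * (2 * nat (k^2)))"
    unfolding sq_def by (simp only: dil_gen)
  have e2: "gen {k::int. 0 < k} (\<lambda>k. 2 * (2 * nat (k^2))) = gen {k::int. 0 < k \<and> even k} (\<lambda>k. nat (k^2))"
    by (rule gen_reindex[OF bij_dbl_pos]) (simp only: nat_4sq)
  have e3: "gen ({k::int. 0 < k \<and> even k} \<union> {k. 0 < k \<and> odd k}) (\<lambda>k. nat (k^2))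
      = gen {k::int. 0 < k \<and> even k} (\<lambda>k. nat (k^2)) + gen {k. 0 < k \<and> odd k} (\<lambda>k. nat (k^2))"
    by (rule gen_union[OF d ff_sq1 ff_sq1])
  have sqeq: "sq = gen {k::int. 0 < k \<and> even k} (\<lambda>k. nat (k^2)) + gen {k. 0 < k \<and> odd k} (\<lambda>k. nat (k^2))"
    unfolding sq_def e3[unfolded U] ..
  show ?thesis unfolding od_def unfolding e1 e2 unfolding sqeq by (rule add_diff_cancel_left')
qed

lemma Th_eq: "Th = 1 + 2 * dil (dil sq) - 2 * od"
proof -
  have ev1: "gen {k::int. even k} (\<lambda>k. nat (k^2)) = gen (UNIV::int set) (\<lambda>k. 2 * (2 * nat (k^2)))"
    by (rule gen_reindex[OF bij_half]) (simp only: mem_Collect_eq half_w)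
  have ev2: "gen (UNIV::int set) (\<lambda>k. 2 * (2 * nat (k^2))) = dil (dil th)"
    unfolding th_def by (simp only: dil_gen)
  have ev3: "dil (dil th) = 1 + 2 * dil (dil sq)"
    by (simp only: th_sq dil_add dil_mult dil_1 dil_numeral)
  have U: "{k. 0 < k \<and> odd k} \<union> {k. k < 0 \<and> odd k} = {k::int. odd k}"
  proof (rule set_eqI)
    fix k :: int
    show "k \<in> {k. 0 < k \<and> odd k} \<union> {k. k < 0 \<and> odd k} \<longleftrightarrow> k \<in> {k. odd k}"
      by (cases "k = 0") auto
  qed
  have d: "{k::int. 0 < k \<and> odd k} \<inter> {k. k < 0 \<and> odd k} = {}" by auto
  have neg: "gen {k::int. k < 0 \<and> odd k} (\<lambda>k. nat (k^2)) = gen {k::int. 0 < k \<and> odd k} (\<lambda>k. nat (k^2))"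
    by (rule gen_reindex[OF bij_neg_pos_odd]) simp
  have o1: "gen ({k. 0 < k \<and> odd k} \<union> {k. k < 0 \<and> odd k}) (\<lambda>k::int. nat (k^2))
      = gen {k::int. 0 < k \<and> odd k} (\<lambda>k. nat (k^2)) + gen {k::int. k < 0 \<and> odd k} (\<lambda>k. nat (k^2))"
    by (rule gen_union[OF d ff_sq1 ff_sq1])
  have o2: "gen {k::int. odd k} (\<lambda>k. nat (k^2)) = od + od"
    using o1 unfolding U neg od_gen[symmetric] .
  show ?thesis unfolding Th_def ev1 ev2 ev3 o2 by (simp only: mult_2)
qed


definition psi :: "int \<times> int \<Rightarrow> int \<times> int" where
  "psi p = (case p of (k, r) \<Rightarrow>
     if 2 * \<bar>k\<bar> < r then (r + 2*k, r - 2*k)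
     else if 0 < k then (2*k + r, 2*k - r) else (- 2*k - r, - 2*k + r))"

definition phi :: "int \<times> int \<Rightarrow> int \<times> int" where
  "phi q = (case q of (m, n) \<Rightarrow>
     if odd ((m + n) div 2) then ((m - n) div 2 div 2, (m + n) div 2)
     else if 0 < (m - n) div 2 then ((m + n) div 2 div 2, (m - n) div 2)
     else (- ((m + n) div 2 div 2), - ((m - n) div 2)))"

lemma phi_psi: assumes "0 < r" "odd r" shows "phi (psi (k, r)) = (k, r)"
proof (cases "2 * \<bar>k\<bar> < r")
  case True
  have "psi (k, r) = (r + 2*k, r - 2*k)" using True by (simp add: psi_def)
  moreover have "phi (r + 2*k, r - 2*k) = (k, r)"
  proof -
    have "(r + 2*k + (r - 2*k)) div 2 = r" by presburger
    moreover have "(r + 2*k - (r - 2*k)) div 2 = 2 * k" by presburger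
    ultimately show ?thesis using assms by (simp add: phi_def)
  qed
  ultimately show ?thesis by simp
next
  case False
  show ?thesis
  proof (cases "0 < k")
    case True
    have "psi (k, r) = (2*k + r, 2*k - r)" using True False by (simp add: psi_def)
    moreover have "phi (2*k + r, 2*k - r) = (k, r)"
    proof -
      have "(2*k + r + (2*k - r)) div 2 = 2 * k" by presburger
      moreover have "(2*k + r - (2*k - r)) div 2 = r" by presburger
      ultimately show ?thesis using assms by (simp add: phi_def)
    qed
    ultimately show ?thesis by simp
  next
    case k: False
    have "psi (k, r) = (- 2*k - r, - 2*k + r)" using k False by (simp add: psi_def)
    moreover have "phi (- 2*k - r, - 2*k + r) = (k, r)"
    proof -
      have "(- 2*k - r + (- 2*k + r)) div 2 = - 2 * k" by presburger
      moreover have "(- 2*k - r - (- 2*k + r)) div 2 = - r" by presburger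
      ultimately show ?thesis using assms by (simp add: phi_def)
    qed
    ultimately show ?thesis by simp
  qed
qed

lemma psi_phi:
  assumes m: "0 < m" "odd m" and n: "0 < n" "odd n"
  shows "psi (phi (m, n)) = (m, n)"
proof -
  define u where "u = (m + n) div 2"
  define v where "v = (m - n) div 2"
  have mu: "m = u + v" and nu: "n = u - v" using m n unfolding u_def v_def by presburger+
  have vu: "\<bar>v\<bar> < u" using m n mu nu by linarith
  show ?thesis
  proof (cases "odd u")
    case True
    have ve: "even v" using True m mu by presburger
    have ph: "phi (m, n) = (v div 2, u)" using True unfolding phi_def u_def v_def by simp
    have "2 * \<bar>v div 2\<bar> < u" using ve vu by (auto elim!: evenE)
    then have "psi (v div 2, u) = (u + 2 * (v div 2), u - 2 * (v div 2))" by (simp add: psi_def)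
    also have "\<dots> = (m, n)" using ve mu nu by (auto elim!: evenE)
    finally show ?thesis using ph by simp
  next
    case False
    then have ue: "even u" by simp
    have upos: "0 < u div 2" using ue vu by (auto elim!: evenE)
    have vo: "odd v" using ue m mu by presburger
    show ?thesis
    proof (cases "0 < v")
      case True
      have ph: "phi (m, n) = (u div 2, v)" using False True unfolding phi_def u_def v_def by simp
      have "\<not> 2 * \<bar>u div 2\<bar> < v" using ue vu upos by (auto elim!: evenE)
      then have "psi (u div 2, v) = (2 * (u div 2) + v, 2 * (u div 2) - v)" using upos by (simp add: psi_def)
      also have "\<dots> = (m, n)" using ue mu nu by (auto elim!: evenE)
      finally show ?thesis using ph by simp
    next
      case vneg: False
      have ph: "phi (m, n) = (- (u div 2), - v)" using False vneg unfolding phi_def u_def v_def by simp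
      have "\<not> 2 * \<bar>- (u div 2)\<bar> < - v" using ue vu upos by (auto elim!: evenE)
      moreover have "\<not> 0 < - (u div 2)" using upos by simp
      ultimately have "psi (- (u div 2), - v) = (- 2 * (- (u div 2)) - (- v), - 2 * (- (u div 2)) + (- v))"
        by (simp add: psi_def)
      also have "\<dots> = (m, n)" using ue mu nu by (auto elim!: evenE)
      finally show ?thesis using ph by simp
    qed
  qed
qed

lemma psi_mem: assumes "0 < r" "odd r"
  shows "0 < fst (psi (k, r)) \<and> odd (fst (psi (k, r))) \<and> 0 < snd (psi (k, r)) \<and> odd (snd (psi (k, r)))"
  using assms unfolding psi_def by (simp split: if_split) presburger

lemma phi_mem: assumes "0 < m" "odd m" "0 < n" "odd n"
  shows "0 < snd (phi (m, n)) \<and> odd (snd (phi (m, n)))"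
  using assms unfolding phi_def by (simp split: if_split) presburger

lemma bij_psi: "bij_betw psi (UNIV \<times> {k::int. 0 < k \<and> odd k}) ({k::int. 0 < k \<and> odd k} \<times> {k::int. 0 < k \<and> odd k})"
proof (rule bij_betw_byWitness[where f' = phi])
  show "\<forall>a\<in>UNIV \<times> {k::int. 0 < k \<and> odd k}. phi (psi a) = a"
    using phi_psi by auto
  show "\<forall>a\<in>{k::int. 0 < k \<and> odd k} \<times> {k::int. 0 < k \<and> odd k}. psi (phi a) = a"
    using psi_phi by auto
  show "psi ` (UNIV \<times> {k::int. 0 < k \<and> odd k}) \<subseteq> {k::int. 0 < k \<and> odd k} \<times> {k::int. 0 < k \<and> odd k}"
  proof
    fix p assume "p \<in> psi ` (UNIV \<times> {k::int. 0 < k \<and> odd k})"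
    then obtain k r where "p = psi (k, r)" "0 < r" "odd r" by auto
    then show "p \<in> {k::int. 0 < k \<and> odd k} \<times> {k::int. 0 < k \<and> odd k}"
      using psi_mem[of r k] by (simp add: mem_Times_iff)
  qed
  show "phi ` ({k::int. 0 < k \<and> odd k} \<times> {k::int. 0 < k \<and> odd k}) \<subseteq> UNIV \<times> {k::int. 0 < k \<and> odd k}"
  proof
    fix p assume "p \<in> phi ` ({k::int. 0 < k \<and> odd k} \<times> {k::int. 0 < k \<and> odd k})"
    then obtain m n where "p = phi (m, n)" "0 < m" "odd m" "0 < n" "odd n" by auto
    then show "p \<in> UNIV \<times> {k::int. 0 < k \<and> odd k}"
      using phi_mem[of m n] by (simp add: mem_Times_iff)
  qed
qed

lemma psi_sq: "fst (psi (k, r))^2 + snd (psi (k, r))^2 = 8 * k^2 + 2 * r^2"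
  unfolding psi_def by (auto simp: power2_eq_square algebra_simps)

lemma psi_w: "(\<lambda>(a, b). nat (a^2) + nat (b^2)) (psi (k, r)) = 2 * (2 * (2 * nat (k^2))) + 2 * nat (r^2)"
proof -
  obtain x y where xy: "psi (k, r) = (x, y)" by (cases "psi (k, r)")
  have "x^2 + y^2 = 8 * k^2 + 2 * r^2" using psi_sq[of k r] xy by simp
  then have "nat (x^2) + nat (y^2) = nat (8 * k^2 + 2 * r^2)" by (simp add: nat_add_distrib[symmetric])
  also have "\<dots> = 2 * (2 * (2 * nat (k^2))) + 2 * nat (r^2)" by (simp add: nat_add_distrib nat_mult_distrib)
  finally show ?thesis using xy by simp
qed

lemma ff8: "ff (A::int set) (\<lambda>k. 2 * (2 * (2 * nat (k^2))))"
proof -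
  have "(\<lambda>k::int. 2 * (2 * (2 * nat (k^2)))) = (\<lambda>k. 8 * nat (k^2))" by (rule ext) simp
  then show ?thesis using ff_sq[of 8 A] by simp
qed

lemma ff2: "ff (A::int set) (\<lambda>k. 2 * nat (k^2))"
  using ff_sq[of 2 A] by simp

lemma rel_gen: "od * od = dil (dil (dil th)) * dil od"
proof -
  have "od * od = gen ({k::int. 0 < k \<and> odd k} \<times> {k::int. 0 < k \<and> odd k}) (\<lambda>(a, b). nat (a^2) + nat (b^2))"
    unfolding od_gen by (rule gen_mult[OF ff_sq1 ff_sq1])
  also have "\<dots> = gen (UNIV \<times> {k::int. 0 < k \<and> odd k}) (\<lambda>(a, b). 2 * (2 * (2 * nat (a^2))) + 2 * nat (b^2))"
    by (rule gen_reindex[OF bij_psi, symmetric]) (auto simp: psi_w)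
  also have "\<dots> = gen (UNIV::int set) (\<lambda>k. 2 * (2 * (2 * nat (k^2)))) * gen {k::int. 0 < k \<and> odd k} (\<lambda>k. 2 * nat (k^2))"
    by (rule gen_mult[OF ff8 ff2, symmetric])
  also have "\<dots> = dil (dil (dil th)) * dil od"
    unfolding th_def od_gen by (simp only: dil_gen)
  finally show ?thesis .
qed

lemma rel: "od^2 = (1 + 2 * dil (dil (dil sq))) * (dil sq - dil (dil (dil sq)))"
proof -
  have "dil (dil (dil th)) = 1 + 2 * dil (dil (dil sq))"
    by (simp only: th_sq dil_add dil_mult dil_1 dil_numeral)
  moreover have "dil od = dil sq - dil (dil (dil sq))"
    by (simp only: od_def dil_diff)
  ultimately show ?thesis using rel_gen by (simp only: power2_eq_square)
qed

lemma U2_od: "U2 od = 0"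
proof (rule fps_ext)
  fix n
  have "{k\<in>{k::int. 0 < k \<and> odd k}. nat (k^2) = 2 * n} = {}"
  proof (rule ccontr)
    assume "{k\<in>{k::int. 0 < k \<and> odd k}. nat (k^2) = 2 * n} \<noteq> {}"
    then obtain k :: int where k: "odd k" "nat (k^2) = 2 * n" by auto
    then have "k^2 = 2 * int n" by (metis nat_eq_iff2 of_nat_mult of_nat_numeral zero_le_power2)
    moreover have "odd (k^2)" using k by simp
    ultimately show False by simp
  qed
  then show "U2 od $ n = 0 $ n" unfolding U2_nth od_gen gen_nth by (simp only: card.empty) simp
qed


definition qp :: "nat \<Rightarrow> rat fps" where "qp n = (\<Prod>j\<in>{1..n}. 1 - fps_X ^ j)"
definition pp :: "nat \<Rightarrow> rat fps" where "pp n = (\<Prod>j\<in>{1..n}. 1 + fps_X ^ j)"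
definition ip :: "int \<Rightarrow> rat fps" where "ip m = (if m < 0 then 0 else inverse (qp (nat m)))"
definition sg :: "int \<Rightarrow> rat fps" where "sg k = (- 1) ^ nat \<bar>k\<bar>"
definition AA :: "nat \<Rightarrow> rat fps" where
  "AA n = (\<Sum>k\<in>{- int n..int n}. sg k * fps_X ^ nat (k^2) * ip (int n - k) * ip (int n + k))"

lemma prod_nth0: "(\<Prod>j\<in>J. f j) $ 0 = (\<Prod>j\<in>J. f j $ 0)"
  by (induction J rule: infinite_finite_induct) (simp_all add: fps_mult_nth_0)

lemma one_minus_X_nth0: "j \<ge> 1 \<Longrightarrow> (1 - fps_X ^ j :: rat fps) $ 0 = 1"
  by simp

lemma qp_nth0: "qp n $ 0 = 1"
  unfolding qp_def prod_nth0 by (intro prod.neutral) simp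

lemma qp_Suc: "qp (Suc n) = qp n * (1 - fps_X ^ Suc n)"
  unfolding qp_def by (simp add: prod.cl_ivl_Suc)

lemma ip_step: assumes "0 \<le> m" shows "ip (m - 1) = ip m * (1 - fps_X ^ nat m)"
proof (cases "m = 0")
  case True then show ?thesis by (simp add: ip_def)
next
  case False
  then obtain j where j: "nat m = Suc j" using assms by (metis gr0_conv_Suc nat_0_iff not_le order_le_less zero_less_nat_eq)
  have m1: "nat (m - 1) = j" using j by simp
  have nz: "(1 - fps_X ^ Suc j :: rat fps) $ 0 \<noteq> 0" by simp
  have "ip m * (1 - fps_X ^ nat m) = inverse (qp j * (1 - fps_X ^ Suc j)) * (1 - fps_X ^ Suc j)"
    using assms j by (simp add: ip_def qp_Suc)
  also have "\<dots> = inverse (qp j) * (inverse (1 - fps_X ^ Suc j) * (1 - fps_X ^ Suc j))"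
    by (simp add: fps_inverse_mult mult.assoc)
  also have "\<dots> = inverse (qp j)" using nz by (simp add: inverse_mult_eq_1)
  also have "\<dots> = ip (m - 1)" using assms False m1 by (simp add: ip_def)
  finally show ?thesis by simp
qed

lemma sg_succ: "sg (k + 1) = - sg k"
proof (cases "0 \<le> k")
  case True
  then have e: "nat \<bar>k + 1\<bar> = Suc (nat \<bar>k\<bar>)" by simp
  show ?thesis unfolding sg_def e by simp
next
  case False
  then have e: "nat \<bar>k\<bar> = Suc (nat \<bar>k + 1\<bar>)" by simp
  show ?thesis unfolding sg_def e by simp
qed

lemma key_alg:
  fixes s P A1 B1 Y1 Y2 :: "'a::comm_ring_1"
  shows "(s*P*A1*B1) * (1 - Y1*Y2) = s*P*(A1*(1-Y1))*(B1*(1-Y2)) + s*(P*Y1)*A1*(B1*(1-Y2)) - (- s*(P*Y2)*(A1*(1-Y1))*B1)"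
  by (simp add: algebra_simps)

lemma tele_int: "(\<Sum>k\<in>{a..a + int d}. f k - f (k + 1)) = f a - (f (a + int d + 1) :: rat fps)"
proof (induction d)
  case 0 then show ?case by simp
next
  case (Suc d)
  have "{a..a + int (Suc d)} = insert (a + int (Suc d)) {a..a + int d}" by auto
  then show ?case using Suc by (simp add: ac_simps)
qed

lemma ip_neg1: "ip (-1) = 0" by (simp add: ip_def)

lemma AA_rec: "AA (Suc n) * (1 - fps_X ^ (2 * Suc n)) = AA n"
proof -
  define N where "N = int n"
  define a where "a k = sg k * fps_X ^ nat (k^2) * ip (N - k) * ip (N + k)" for k
  define c where "c k = sg k * fps_X ^ nat (k^2 + N + 1 - k) * ip (N + 1 - k) * ip (N + k)" for k
  define t where "t k = sg k * fps_X ^ nat (k^2) * ip (N + 1 - k) * ip (N + 1 + k)" for k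
  have AS: "AA (Suc n) = (\<Sum>k\<in>{-(N+1)..N+1}. t k)"
    unfolding AA_def t_def N_def by (simp add: ac_simps)
  have AN: "AA n = (\<Sum>k\<in>{-N..N}. a k)"
    unfolding AA_def a_def N_def ..
  have tm: "t k * (1 - fps_X ^ (2 * Suc n)) = a k + c k - c (k + 1)" if k: "k \<in> {-(N+1)..N+1}" for k
  proof -
    define e1 where "e1 = nat (N + 1 - k)"
    define e2 where "e2 = nat (N + 1 + k)"
    have k1: "0 \<le> N + 1 - k" "0 \<le> N + 1 + k" using k by auto
    have A0: "ip (N - k) = ip (N + 1 - k) * (1 - fps_X ^ e1)"
      using ip_step[OF k1(1)] unfolding e1_def by (simp add: algebra_simps)
    have B0: "ip (N + k) = ip (N + 1 + k) * (1 - fps_X ^ e2)"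
      using ip_step[OF k1(2)] unfolding e2_def by (simp add: algebra_simps)
    have "int (e1 + e2) = int (2 * Suc n)" unfolding e1_def e2_def using k1 N_def by simp
    then have "e1 + e2 = 2 * Suc n" by (simp only: of_nat_eq_iff)
    then have Y: "fps_X ^ (2 * Suc n) = (fps_X ^ e1 * fps_X ^ e2 :: rat fps)" by (simp add: power_add[symmetric])
    have "nat (k^2 + N + 1 - k) = nat (k^2) + e1" unfolding e1_def using k1 by (simp add: nat_add_distrib[symmetric] algebra_simps)
    then have P1: "fps_X ^ nat (k^2 + N + 1 - k) = (fps_X ^ nat (k^2) * fps_X ^ e1 :: rat fps)" by (simp add: power_add)
    have "nat ((k + 1)^2 + N + 1 - (k + 1)) = nat (k^2) + e2" unfolding e2_def using k1
      by (simp add: nat_add_distrib[symmetric] algebra_simps power2_eq_square)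
    then have P2: "fps_X ^ nat ((k + 1)^2 + N + 1 - (k + 1)) = (fps_X ^ nat (k^2) * fps_X ^ e2 :: rat fps)" by (simp add: power_add)
    have ck1: "c (k + 1) = - sg k * (fps_X ^ nat (k^2) * fps_X ^ e2) * ip (N - k) * ip (N + 1 + k)"
    proof -
      have "c (k + 1) = sg (k + 1) * fps_X ^ nat ((k + 1)^2 + N + 1 - (k + 1)) * ip (N + 1 - (k + 1)) * ip (N + (k + 1))"
        by (simp only: c_def)
      also have "N + 1 - (k + 1) = N - k" by simp
      also have "N + (k + 1) = N + 1 + k" by simp
      finally show ?thesis by (simp only: sg_succ P2)
    qed
    have "t k * (1 - fps_X ^ (2 * Suc n)) = (sg k * fps_X ^ nat (k^2) * ip (N + 1 - k) * ip (N + 1 + k)) * (1 - fps_X ^ e1 * fps_X ^ e2)"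
      by (simp only: t_def Y)
    also have "\<dots> = sg k * fps_X ^ nat (k^2) * (ip (N + 1 - k) * (1 - fps_X ^ e1)) * (ip (N + 1 + k) * (1 - fps_X ^ e2))
       + sg k * (fps_X ^ nat (k^2) * fps_X ^ e1) * ip (N + 1 - k) * (ip (N + 1 + k) * (1 - fps_X ^ e2))
       - (- sg k * (fps_X ^ nat (k^2) * fps_X ^ e2) * (ip (N + 1 - k) * (1 - fps_X ^ e1)) * ip (N + 1 + k))"
      by (rule key_alg)
    also have "\<dots> = a k + c k - c (k + 1)"
      unfolding ck1 unfolding a_def c_def P1 A0 B0 ..
    finally show ?thesis .
  qed
  have "AA (Suc n) * (1 - fps_X ^ (2 * Suc n)) = (\<Sum>k\<in>{-(N+1)..N+1}. a k + (c k - c (k + 1)))"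
    unfolding AS sum_distrib_right by (intro sum.cong refl, subst tm, assumption, simp only: add_diff_eq)
  also have "\<dots> = (\<Sum>k\<in>{-(N+1)..N+1}. a k) + (\<Sum>k\<in>{-(N+1)..N+1}. c k - c (k + 1))"
    by (rule sum.distrib)
  also have "(\<Sum>k\<in>{-(N+1)..N+1}. c k - c (k + 1)) = c (-(N+1)) - c (-(N+1) + int (2 * n + 2) + 1)"
  proof -
    have "{-(N+1)..N+1} = {-(N+1)..-(N+1) + int (2 * n + 2)}" unfolding N_def by simp
    then show ?thesis using tele_int[of c "-(N+1)" "2 * n + 2"] by (simp add: ac_simps)
  qed
  also have "c (-(N+1)) = 0" unfolding c_def by (simp add: ip_neg1)
  also have "c (-(N+1) + int (2 * n + 2) + 1) = 0"
  proof -
    have "N + 1 - (-(N+1) + int (2 * n + 2) + 1) = -1" unfolding N_def by simp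
    then show ?thesis unfolding c_def by (simp add: ip_neg1)
  qed
  also have "(\<Sum>k\<in>{-(N+1)..N+1}. a k) = (\<Sum>k\<in>{-N..N}. a k)"
  proof (rule sum.mono_neutral_right)
    show "\<forall>i\<in>{- (N + 1)..N + 1} - {- N..N}. a i = 0"
    proof
      fix i assume "i \<in> {- (N + 1)..N + 1} - {- N..N}"
      then have "i = N + 1 \<or> i = -(N+1)" by auto
      then show "a i = 0" unfolding a_def by (auto simp: ip_neg1)
    qed
  qed auto
  finally show ?thesis using AN by simp
qed


lemma AA_0: "AA 0 = 1"
  by (simp add: AA_def sg_def ip_def qp_def)

lemma AA_prod: "AA n * (\<Prod>j\<in>{1..n}. 1 - fps_X ^ (2 * j)) = 1"
proof (induction n)
  case 0 then show ?case by (simp add: AA_0)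
next
  case (Suc n)
  have "AA (Suc n) * (\<Prod>j\<in>{1..Suc n}. 1 - fps_X ^ (2 * j)) = (AA (Suc n) * (1 - fps_X ^ (2 * Suc n))) * (\<Prod>j\<in>{1..n}. 1 - fps_X ^ (2 * j))"
    by (simp add: prod.cl_ivl_Suc ac_simps)
  also have "\<dots> = 1" using Suc by (simp only: AA_rec)
  finally show ?case .
qed

lemma prod_2j: "(\<Prod>j\<in>{1..n}. 1 - fps_X ^ (2 * j)) = qp n * (pp n :: rat fps)"
proof -
  have "(\<Prod>j\<in>{1..n}. (1 - fps_X ^ (2 * j) :: rat fps)) = (\<Prod>j\<in>{1..n}. (1 - fps_X ^ j) * (1 + fps_X ^ j))"
    by (intro prod.cong refl) (simp add: algebra_simps power_mult power2_eq_square mult.commute[of 2])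
  also have "\<dots> = qp n * pp n" unfolding qp_def pp_def by (rule prod.distrib)
  finally show ?thesis .
qed

lemma B_pp: "(qp n * qp n * AA n) * pp n = qp n"
proof -
  have "(qp n * qp n * AA n) * pp n = qp n * (AA n * (qp n * pp n))" by (simp only: ac_simps)
  also have "\<dots> = qp n" using AA_prod[of n] by (simp only: prod_2j mult_1_right)
  finally show ?thesis .
qed

lemma meq_one_minus: "m \<le> j \<Longrightarrow> meq m (1 - fps_X ^ j) 1"
  unfolding meq_def by (simp add: le_imp_power_dvd)

lemma qp_split: "a \<le> b \<Longrightarrow> qp b = qp a * (\<Prod>j\<in>{a+1..b}. 1 - fps_X ^ j)"
proof -
  assume "a \<le> b"
  then have "{1..b} = {1..a} \<union> {a+1..b}" by auto
  moreover have "{1..a} \<inter> {a+1..b} = {}" by auto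
  ultimately show ?thesis unfolding qp_def by (simp add: prod.union_disjoint)
qed

lemma meq_tail: "meq (a + 1) (\<Prod>j\<in>{a+1..b}. 1 - fps_X ^ j) 1"
proof -
  have "meq (a + 1) (\<Prod>j\<in>{a+1..b}. 1 - fps_X ^ j) (\<Prod>j\<in>{a+1..b}. 1)"
    by (rule meq_prod) (auto intro: meq_one_minus)
  then show ?thesis by simp
qed

lemma tail_nth0: "(\<Prod>j\<in>{a+1..b}. 1 - fps_X ^ j :: rat fps) $ 0 = 1"
  unfolding prod_nth0 by (intro prod.neutral) simp

lemma qp_ratio: "meq (min a n + 1) (qp n * inverse (qp a)) 1"
proof (cases "a \<le> n")
  case True
  have "qp n * inverse (qp a) = (\<Prod>j\<in>{a+1..n}. 1 - fps_X ^ j) * (qp a * inverse (qp a))"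
    using qp_split[OF True] by (simp only: ac_simps)
  also have "\<dots> = (\<Prod>j\<in>{a+1..n}. 1 - fps_X ^ j)" using qp_nth0[of a] by (simp add: inverse_mult_eq_1')
  finally show ?thesis using meq_tail[of a n] True by simp
next
  case False
  then have le: "n \<le> a" by simp
  have "qp n * inverse (qp a) = (qp n * inverse (qp n)) * inverse (\<Prod>j\<in>{n+1..a}. 1 - fps_X ^ j)"
    using qp_split[OF le] by (simp add: fps_inverse_mult ac_simps)
  also have "\<dots> = inverse (\<Prod>j\<in>{n+1..a}. 1 - fps_X ^ j)" using qp_nth0[of n] by (simp add: inverse_mult_eq_1')
  finally have e: "qp n * inverse (qp a) = inverse (\<Prod>j\<in>{n+1..a}. 1 - fps_X ^ j)" .
  have "meq (n + 1) (inverse (\<Prod>j\<in>{n+1..a}. 1 - fps_X ^ j)) (inverse 1)"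
    by (rule meq_inverse[OF meq_tail]) (use tail_nth0[of n a] in simp_all)
  then show ?thesis using e le by simp
qed


lemma ip_qp: "0 \<le> m \<Longrightarrow> ip m = inverse (qp (nat m))"
  by (simp add: ip_def)

lemma B_meq: "meq (n + 1) (qp n * qp n * AA n) (\<Sum>k\<in>{-int n..int n}. sg k * fps_X ^ nat (k^2))"
proof -
  define N where "N = int n"
  have "qp n * qp n * AA n = (\<Sum>k\<in>{-N..N}. sg k * (fps_X ^ nat (k^2) * ((qp n * ip (N - k)) * (qp n * ip (N + k)))))"
    unfolding AA_def N_def sum_distrib_left by (intro sum.cong refl) (simp only: ac_simps)
  moreover have "meq (n + 1) (\<Sum>k\<in>{-N..N}. sg k * (fps_X ^ nat (k^2) * ((qp n * ip (N - k)) * (qp n * ip (N + k)))))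
                            (\<Sum>k\<in>{-N..N}. sg k * (fps_X ^ nat (k^2) * 1))"
  proof (rule meq_sum)
    fix k assume k: "k \<in> {-N..N}"
    define m where "m = n - nat \<bar>k\<bar>"
    have k0: "0 \<le> N - k" "0 \<le> N + k" using k by auto
    have m1: "m \<le> min (nat (N - k)) n" "m \<le> min (nat (N + k)) n" unfolding m_def N_def using k0 N_def by auto
    have r1: "meq (m + 1) (qp n * ip (N - k)) 1"
      using meq_mono[OF qp_ratio[of "nat (N - k)" n]] m1 by (simp add: ip_qp[OF k0(1)])
    have r2: "meq (m + 1) (qp n * ip (N + k)) 1"
      using meq_mono[OF qp_ratio[of "nat (N + k)" n]] m1 by (simp add: ip_qp[OF k0(2)])
    have r12: "meq (m + 1) ((qp n * ip (N - k)) * (qp n * ip (N + k))) (1 * 1)"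
      by (rule meq_mult[OF r1 r2])
    have "meq (m + 1 + nat (k^2)) (fps_X ^ nat (k^2) * ((qp n * ip (N - k)) * (qp n * ip (N + k)))) (fps_X ^ nat (k^2) * (1 * 1))"
      by (rule meq_shift[OF r12])
    then have "meq (m + 1 + nat (k^2)) (fps_X ^ nat (k^2) * ((qp n * ip (N - k)) * (qp n * ip (N + k)))) (fps_X ^ nat (k^2) * 1)"
      by (simp only: mult_1_right)
    moreover have "n + 1 \<le> m + 1 + nat (k^2)"
    proof -
      have "\<bar>k\<bar> \<le> k^2" by (rule absq)
      then have "nat \<bar>k\<bar> \<le> nat (k^2)" by simp
      moreover have "nat \<bar>k\<bar> \<le> n" using k N_def by auto
      ultimately show ?thesis unfolding m_def by linarith
    qed
    ultimately have "meq (n + 1) (fps_X ^ nat (k^2) * ((qp n * ip (N - k)) * (qp n * ip (N + k)))) (fps_X ^ nat (k^2) * 1)"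
      by (rule meq_mono)
    then show "meq (n + 1) (sg k * (fps_X ^ nat (k^2) * ((qp n * ip (N - k)) * (qp n * ip (N + k))))) (sg k * (fps_X ^ nat (k^2) * 1))"
      by (rule meq_mult[OF meq_refl])
  qed
  ultimately show ?thesis unfolding N_def by simp
qed

lemma sg_eq: "sg k = (if even k then 1 else - 1)"
proof -
  have "even (nat \<bar>k\<bar>) \<longleftrightarrow> even k" by (simp add: even_nat_iff)
  then show ?thesis unfolding sg_def by (simp add: minus_one_power_iff)
qed

lemma sum_sub_meq:
  assumes "finite F" "G \<subseteq> F" "\<And>x. x \<in> F - G \<Longrightarrow> meq m (f x) 0"
  shows "meq m (sum f F) (sum f G)"
proof -
  have e: "sum f F = sum f G + sum f (F - G)" using sum.subset_diff[OF assms(2,1)] by (simp only: add.commute)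
  have "meq m (sum f (F - G)) (\<Sum>x\<in>F - G. 0)" by (rule meq_sum) (rule assms(3))
  then have z: "meq m (sum f (F - G)) 0" by simp
  have "meq m (sum f G + sum f (F - G)) (sum f G + 0)" by (rule meq_add[OF meq_refl z])
  then show ?thesis unfolding e by simp
qed

lemma theta_trunc:
  fixes P :: "int \<Rightarrow> bool"
  shows "meq (n + 1) (\<Sum>k\<in>{k\<in>{-int n..int n}. P k}. fps_X ^ nat (k^2)) (gen {k. P k} (\<lambda>k. nat (k^2)))"
proof -
  let ?G = "{x\<in>{k. P k}. nat (x^2) < n + 1}"
  have sub: "?G \<subseteq> {k\<in>{-int n..int n}. P k}"
  proof
    fix x assume x: "x \<in> ?G"
    have "\<bar>x\<bar> \<le> x^2" by (rule absq)
    then have "\<bar>x\<bar> \<le> int n" using x by auto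
    then show "x \<in> {k\<in>{-int n..int n}. P k}" using x by auto
  qed
  have finS: "finite {k\<in>{-int n..int n}. P k}" by (rule finite_subset[of _ "{-int n..int n}"]) auto
  have fin: "finite ?G" by (rule finite_subset[OF sub finS])
  have "meq (n + 1) (\<Sum>k\<in>{k\<in>{-int n..int n}. P k}. fps_X ^ nat (k^2)) (\<Sum>k\<in>?G. fps_X ^ nat (k^2))"
  proof (rule sum_sub_meq[OF _ sub])
    fix x assume "x \<in> {k\<in>{-int n..int n}. P k} - ?G"
    then have "n + 1 \<le> nat (x^2)" by auto
    then show "meq (n + 1) (fps_X ^ nat (x^2)) 0" using meq_Xpow[of "n + 1" "nat (x^2)" 1] by simp
  qed (rule finS)
  moreover have "meq (n + 1) (gen {k. P k} (\<lambda>k. nat (k^2))) (\<Sum>k\<in>?G. fps_X ^ nat (k^2))"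
    by (rule gen_trunc[OF fin])
  ultimately show ?thesis by (blast intro: meq_sym meq_trans)
qed

lemma Th_meq: "meq (n + 1) (\<Sum>k\<in>{-int n..int n}. sg k * fps_X ^ nat (k^2)) Th"
proof -
  let ?S = "{-int n..int n}"
  have "(\<Sum>k\<in>?S. sg k * fps_X ^ nat (k^2)) = (\<Sum>k\<in>?S \<inter> {k. even k}. sg k * fps_X ^ nat (k^2)) + (\<Sum>k\<in>?S - {k. even k}. sg k * fps_X ^ nat (k^2))"
    by (rule sum.Int_Diff) simp
  also have "(\<Sum>k\<in>?S \<inter> {k. even k}. sg k * fps_X ^ nat (k^2)) = (\<Sum>k\<in>{k\<in>?S. even k}. fps_X ^ nat (k^2))"
    by (intro sum.cong) (auto simp: sg_eq)
  also have "(\<Sum>k\<in>?S - {k. even k}. sg k * fps_X ^ nat (k^2)) = - (\<Sum>k\<in>{k\<in>?S. odd k}. fps_X ^ nat (k^2))"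
    unfolding sum_negf[symmetric] by (intro sum.cong) (auto simp: sg_eq)
  finally have e: "(\<Sum>k\<in>?S. sg k * fps_X ^ nat (k^2)) = (\<Sum>k\<in>{k\<in>?S. even k}. fps_X ^ nat (k^2)) - (\<Sum>k\<in>{k\<in>?S. odd k}. fps_X ^ nat (k^2))"
    by simp
  show ?thesis unfolding e Th_def by (intro meq_diff theta_trunc)
qed


lemma fk_nth: "fk k $ i = (\<Prod>m\<in>{1..i}. 1 - fps_X ^ (m * k)) $ i"
  by (simp add: fk_def)

lemma prod_split: "i \<le> (n::nat) \<Longrightarrow> (\<Prod>m\<in>{1..n}. f m) = (\<Prod>m\<in>{1..i}. f m) * (\<Prod>m\<in>{i+1..n}. (f m :: rat fps))"
proof -
  assume "i \<le> n"
  then have "{1..n} = {1..i} \<union> {i+1..n}" by auto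
  moreover have "{1..i} \<inter> {i+1..n} = {}" by auto
  ultimately show ?thesis by (simp add: prod.union_disjoint)
qed

lemma FK: assumes "1 \<le> k" shows "meq (n + 1) (fk k) (\<Prod>m\<in>{1..n}. 1 - fps_X ^ (m * k))"
proof (rule meqI)
  fix i assume i: "i < n + 1"
  have "meq (i + 1) (\<Prod>m\<in>{i+1..n}. 1 - fps_X ^ (m * k)) (\<Prod>m\<in>{i+1..n}. 1)"
  proof (rule meq_prod)
    fix m assume "m \<in> {i+1..n}"
    then have "i + 1 \<le> m * k" using assms by (metis atLeastAtMost_iff le_trans mult_le_mono2 mult.right_neutral)
    then show "meq (i + 1) (1 - fps_X ^ (m * k)) 1" by (rule meq_one_minus)
  qed
  then have t: "meq (i + 1) (\<Prod>m\<in>{i+1..n}. 1 - fps_X ^ (m * k)) 1" by simp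
  have t2: "meq (i + 1) ((\<Prod>m\<in>{1..i}. 1 - fps_X ^ (m * k)) * (\<Prod>m\<in>{i+1..n}. 1 - fps_X ^ (m * k))) ((\<Prod>m\<in>{1..i}. 1 - fps_X ^ (m * k)) * 1)"
    by (rule meq_mult[OF meq_refl t])
  have "meq (i + 1) (\<Prod>m\<in>{1..n}. 1 - fps_X ^ (m * k)) (\<Prod>m\<in>{1..i}. 1 - fps_X ^ (m * k))"
  proof -
    have sp: "(\<Prod>m\<in>{1..n}. 1 - fps_X ^ (m * k) :: rat fps) = (\<Prod>m\<in>{1..i}. 1 - fps_X ^ (m * k)) * (\<Prod>m\<in>{i+1..n}. 1 - fps_X ^ (m * k))"
      using prod_split[of i n "\<lambda>m. 1 - fps_X ^ (m * k)"] i by simp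
    show ?thesis using t2 unfolding sp by simp
  qed
  then have "(\<Prod>m\<in>{1..n}. 1 - fps_X ^ (m * k) :: rat fps) $ i = (\<Prod>m\<in>{1..i}. 1 - fps_X ^ (m * k)) $ i"
    by (rule meq_nth) simp
  then show "fk k $ i = (\<Prod>m\<in>{1..n}. 1 - fps_X ^ (m * k)) $ i" by (simp add: fk_nth)
qed

lemma gauss: "fk 1 ^ 2 = fk 2 * Th"
proof (rule meq_eq)
  fix n
  have f1: "meq (n + 1) (fk 1) (qp n)" using FK[of 1 n] by (simp add: qp_def)
  have h2: "(\<Prod>m\<in>{1..n}. 1 - fps_X ^ (m * 2)) = (\<Prod>j\<in>{1..n}. 1 - fps_X ^ (2 * j) :: rat fps)"
    by (simp add: mult.commute)
  have f2: "meq (n + 1) (fk 2) (qp n * pp n)" using FK[of 2 n] unfolding h2 prod_2j by simp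
  have "meq (n + 1) (Th * pp n) ((qp n * qp n * AA n) * pp n)"
    by (rule meq_mult[OF meq_sym[OF meq_trans[OF B_meq Th_meq]] meq_refl])
  then have g: "meq (n + 1) (Th * pp n) (qp n)" by (simp only: B_pp)
  have "meq (n + 1) (fk 2 * Th) (qp n * pp n * Th)" by (rule meq_mult[OF f2 meq_refl])
  moreover have "qp n * pp n * Th = qp n * (Th * pp n)" by (simp only: ac_simps)
  moreover have "meq (n + 1) (qp n * (Th * pp n)) (qp n * qp n)" by (rule meq_mult[OF meq_refl g])
  moreover have "meq (n + 1) (fk 1 ^ 2) (qp n * qp n)" unfolding power2_eq_square by (rule meq_mult[OF f1 f1])
  ultimately have "meq (n + 1) (fk 1 ^ 2) (fk 2 * Th)" by (metis meq_sym meq_trans)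
  then show "meq n (fk 1 ^ 2) (fk 2 * Th)" by (rule meq_mono) simp
qed

lemma dil_fk: assumes "1 \<le> k" shows "dil (fk k) = fk (2 * k)"
proof (rule meq_eq)
  fix n
  have "meq (n + 1) (dil (fk k)) (dil (\<Prod>m\<in>{1..n}. 1 - fps_X ^ (m * k)))"
    by (rule dil_meq[OF FK[OF assms]])
  also have "dil (\<Prod>m\<in>{1..n}. 1 - fps_X ^ (m * k)) = (\<Prod>m\<in>{1..n}. 1 - fps_X ^ (m * (2 * k)))"
    by (simp add: dil_prod dil_diff dil_1 dil_X_power ac_simps)
  finally have a: "meq (n + 1) (dil (fk k)) (\<Prod>m\<in>{1..n}. 1 - fps_X ^ (m * (2 * k)))" .
  have b: "meq (n + 1) (fk (2 * k)) (\<Prod>m\<in>{1..n}. 1 - fps_X ^ (m * (2 * k)))"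
    by (rule FK) (use assms in simp)
  have "meq (n + 1) (dil (fk k)) (fk (2 * k))" by (rule meq_trans[OF a meq_sym[OF b]])
  then show "meq n (dil (fk k)) (fk (2 * k))" by (rule meq_mono) simp
qed

lemma fk_nth0: "fk k $ 0 = 1"
  by (simp add: fk_nth)

lemma bt_formula: "btbar_gf = inverse ((Th * dil Th) ^ 3)"
proof -
  have d1: "dil (fk 1) = fk 2" using dil_fk[of 1] by simp
  have d2: "dil (fk 2) = fk 4" using dil_fk[of 2] by simp
  have g2: "fk 2 ^ 2 = fk 4 * dil Th"
    using arg_cong[OF gauss, of dil] by (simp only: dil_power dil_mult d1 d2)
  have "fk 1 ^ 6 * fk 2 ^ 3 = (fk 1 ^ 2) ^ 3 * fk 2 ^ 3" by (simp add: power_mult[symmetric])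
  also have "\<dots> = (fk 2 ^ 2) ^ 3 * Th ^ 3" by (simp only: gauss power_mult_distrib ac_simps power_mult[symmetric]) simp
  also have "\<dots> = fk 4 ^ 3 * (Th * dil Th) ^ 3" by (simp only: g2 power_mult_distrib ac_simps)
  finally have e: "fk 1 ^ 6 * fk 2 ^ 3 = fk 4 ^ 3 * (Th * dil Th) ^ 3" .
  have nz: "(fk 4 ^ 3) $ 0 \<noteq> 0" by (simp add: fps_nth_power_0 fk_nth0)
  have "btbar_gf = (fk 4 ^ 3 * inverse (fk 4 ^ 3)) * inverse ((Th * dil Th) ^ 3)"
    unfolding btbar_gf_def e by (simp only: fps_inverse_mult ac_simps)
  also have "\<dots> = inverse ((Th * dil Th) ^ 3)" using nz by (simp add: inverse_mult_eq_1')
  finally show ?thesis .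
qed



definition T5 :: "'a::idom \<Rightarrow> 'a" where
  "T5 x = 1 + 58 * x + 24 * x^2 + 48 * x^3 + 48 * x^4 + 32 * x^5"

lemma T5_inv:
  fixes x :: "'a::idom"
  shows "(1 + 2 * x)^3 * T5 x = 1 + 64 * (x + 6 * x^2 + 14 * x^3 + 17 * x^4 + 17 * x^5 + 18 * x^6 + 12 * x^7 + 4 * x^8)"
  unfolding T5_def by algebra

definition PA0 :: "'a::idom \<Rightarrow> 'a \<Rightarrow> 'a \<Rightarrow> 'a" where
  "PA0 x y z = 1 + 28 * z + 58 * y + 56 * y * z + 24 * y^2 + 48 * y^3 + 48 * y^4 + 32 * y^5 + 30 * x + 44 * x * y + 48 * x * y^2 + 32 * x * y^3 + 32 * x * y^4 + 24 * x^2 + 48 * x^2 * y + 48 * x^3 + 32 * x^3 * y + 48 * x^4 + 32 * x^4 * y + 32 * x^5"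

definition PB0 :: "'a::idom \<Rightarrow> 'a \<Rightarrow> 'a \<Rightarrow> 'a" where
  "PB0 x y z = 6 + 40 * z + 16 * y + 48 * y^2 + 32 * y^4 + 52 * x + 32 * x * y + 32 * x * y^2 + 16 * x^2 + 32 * x^3 + 32 * x^4"

definition PA1 :: "'a::idom \<Rightarrow> 'a \<Rightarrow> 'a \<Rightarrow> 'a" where
  "PA1 x y z = 1 + 40 * z + 58 * y + 48 * y * z + 24 * y^2 + 32 * y^2 * z + 48 * y^3 + 48 * y^4 + 32 * y^5 + 18 * x + 32 * x * z + 52 * x * y + 16 * x * y^2 + 32 * x * y^3 + 32 * x * y^4 + 56 * x^2 + 32 * x^2 * z + 48 * x^2 * y + 16 * x^3 + 32 * x^3 * y + 48 * x^4 + 32 * x^4 * y + 32 * x^5"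

definition PB1 :: "'a::idom \<Rightarrow> 'a \<Rightarrow> 'a \<Rightarrow> 'a" where
  "PB1 x y z = 30 + 16 * z + 48 * y + 16 * y^2 + 32 * y^4 + 28 * x + 32 * x * y + 32 * x * y^2 + 48 * x^2 + 32 * x^3 + 32 * x^4"

definition PA2 :: "'a::idom \<Rightarrow> 'a \<Rightarrow> 'a \<Rightarrow> 'a" where
  "PA2 x y z = 1 + 8 * z + 58 * y + 48 * y * z + 24 * y^2 + 32 * y^2 * z + 48 * y^3 + 48 * y^4 + 32 * y^5 + 50 * x + 32 * x * z + 52 * x * y + 16 * x * y^2 + 32 * x * y^3 + 32 * x * y^4 + 56 * x^2 + 32 * x^2 * z + 48 * x^2 * y + 16 * x^3 + 32 * x^3 * y + 48 * x^4 + 32 * x^4 * y + 32 * x^5"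

definition PB2 :: "'a::idom \<Rightarrow> 'a \<Rightarrow> 'a \<Rightarrow> 'a" where
  "PB2 x y z = 18 + 48 * z + 16 * y + 48 * y^2 + 32 * y^4 + 4 * x + 32 * x * y + 32 * x * y^2 + 16 * x^2 + 32 * x^3 + 32 * x^4"

definition PA3 :: "'a::idom \<Rightarrow> 'a \<Rightarrow> 'a \<Rightarrow> 'a" where
  "PA3 x y z = 1 + 8 * z + 58 * y + 48 * y * z + 24 * y^2 + 32 * y^2 * z + 48 * y^3 + 48 * y^4 + 32 * y^5 + 50 * x + 32 * x * z + 52 * x * y + 16 * x * y^2 + 32 * x * y^3 + 32 * x * y^4 + 56 * x^2 + 32 * x^2 * z + 48 * x^2 * y + 16 * x^3 + 32 * x^3 * y + 48 * x^4 + 32 * x^4 * y + 32 * x^5"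

definition PB3 :: "'a::idom \<Rightarrow> 'a \<Rightarrow> 'a \<Rightarrow> 'a" where
  "PB3 x y z = 50 + 48 * z + 16 * y + 48 * y^2 + 32 * y^4 + 4 * x + 32 * x * y + 32 * x * y^2 + 16 * x^2 + 32 * x^3 + 32 * x^4"

lemma step_init:
  fixes w x y z :: "'a::idom"
  assumes "w^2 = (1 + 2*z) * (x - z)"
  shows "T5 (y - w) * T5 (2*z - x) = PA0 x y z + w * PB0 x y z + 64 * (z - 42 * z^2 - 27 * z^3 + 219 * z^4 + 364 * z^5 + 1056 * z^6 + 3456 * z^7 + 5376 * z^8 + 3072 * z^9 + 102 * y * z - 176 * y * z^2 - 90 * y * z^3 + 810 * y * z^4 + 552 * y * z^5 + 960 * y * z^6 + 9472 * y * z^7 + 17920 * y * z^8 + 10240 * y * z^9 + 39 * y^2 * z - 495 * y^2 * z^2 - 1332 * y^2 * z^3 - 2304 * y^2 * z^4 - 6528 * y^2 * z^5 - 11520 * y^2 * z^6 - 9216 * y^2 * z^7 + 82 * y^3 * z - 518 * y^3 * z^2 - 1352 * y^3 * z^3 - 2304 * y^3 * z^4 - 6912 * y^3 * z^5 - 12800 * y^3 * z^6 - 10240 * y^3 * z^7 + 87 * y^4 * z + 72 * y^4 * z^2 + 288 * y^4 * z^3 + 576 * y^4 * z^4 + 768 * y^4 * z^5 + 58 * y^5 * z + 48 * y^5 * z^2 + 192 * y^5 * z^3 + 384 * y^5 * z^4 + 512 * y^5 * z^5 - x + 63 * x * z - 30 * x * z^2 - 612 * x * z^3 - 1198 * x *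 z^4 - 4128 * x * z^5 - 14016 * x * z^6 - 23040 * x * z^7 - 13824 * x * z^8 - 51 * x * y + 304 * x * y * z - 52 * x * y * z^2 - 2008 * x * y * z^3 - 1956 * x * y * z^4 - 5568 * x * y * z^5 - 39552 * x * y * z^6 - 76800 * x * y * z^7 - 46080 * x * y * z^8 - 18 * x * y^2 + 756 * x * y^2 * z + 2214 * x * y^2 * z^2 + 5472 * x * y^2 * z^3 + 18048 * x * y^2 * z^4 + 36864 * x * y^2 * z^5 + 32256 * x * y^2 * z^6 - 39 * x * y^3 + 808 * x * y^3 * z + 2268 * x * y^3 * z^2 + 5568 * x * y^3 * z^3 + 19200 * x * y^3 * z^4 + 40960 * x * y^3 * z^5 + 35840 * x * y^3 * z^6 - 44 * x * y^4 - 72 * x * y^4 * z - 432 * x * y^4 * z^2 - 1152 * x * y^4 * z^3 - 1920 * x * y^4 * z^4 - 29 * x * y^5 - 48 * x * y^5 * z - 288 * x * y^5 * z^2 - 768 * x * y^5 * z^3 - 1280 * x * y^5 * z^4 - 21 * x^2 + 93 * x^2 * z + 537 * x^2 * z^2 + 1384 * x^2 * z^3 + 6216 * x^2 * z^4 + 23136 * x^2 * z^5 + 41088 * x^2 * z^6 + 26112 * x^2 * z^7 - 107 * x^2 * y + 320 * x^2 * y * z + 1670 * x^2 * y * z^2 + 2384 * x^2 * y * z^3 + 10224 * x^2 * y * z^4 + 66880 * x^2 * y * z^5 + 136960 * x^2 * y * z^6 + 87040 * x^2 * y * z^7 - 252 * x^2 * y^2 - 954 * x^2 * y^2 * z - 4536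 * x^2 * y^2 * z^2 - 18912 * x^2 * y^2 * z^3 - 47232 * x^2 * y^2 * z^4 - 46080 * x^2 * y^2 * z^5 - 272 * x^2 * y^3 - 964 * x^2 * y^3 * z - 4656 * x^2 * y^3 * z^2 - 20160 * x^2 * y^3 * z^3 - 52480 * x^2 * y^3 * z^4 - 51200 * x^2 * y^3 * z^5 + 18 * x^2 * y^4 + 216 * x^2 * y^4 * z + 864 * x^2 * y^4 * z^2 + 1920 * x^2 * y^4 * z^3 + 12 * x^2 * y^5 + 144 * x^2 * y^5 * z + 576 * x^2 * y^5 * z^2 + 1280 * x^2 * y^5 * z^3 - 36 * x^3 - 144 * x^3 * z - 698 * x^3 * z^2 - 4608 * x^3 * z^3 - 20112 * x^3 * z^4 - 39552 * x^3 * z^5 - 26880 * x^3 * z^6 - 135 * x^3 * y - 424 * x^3 * y * z - 1212 * x^3 * y * z^2 - 8448 * x^3 * y * z^3 - 59360 * x^3 * y * z^4 - 131840 * x^3 * y * z^5 - 89600 * x^3 * y * z^6 + 90 * x^3 * y^2 + 1584 * x^3 * y^2 * z + 9456 * x^3 * y^2 * z^2 + 31104 * x^3 * y^2 * z^3 + 34560 * x^3 * y^2 * z^4 + 84 * x^3 * y^3 + 1632 * x^3 * y^3 * z + 10080 * x^3 * y^3 * z^2 + 34560 * x^3 * y^3 * z^3 + 38400 * x^3 * y^3 * z^4 - 36 * x^3 * y^4 - 288 * x^3 * y^4 * z - 960 * x^3 * y^4 * z^2 - 24 * x^3 * y^5 - 192 * x^3 * y^5 * z - 640 * x^3 * y^5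 * z^2 + 167 * x^4 * z + 1776 * x^4 * z^2 + 9936 * x^4 * z^3 + 22224 * x^4 * z^4 + 16320 * x^4 * z^5 - 5 * x^4 * y + 302 * x^4 * y * z + 3456 * x^4 * y * z^2 + 29920 * x^4 * y * z^3 + 74080 * x^4 * y * z^4 + 54400 * x^4 * y * z^5 - 198 * x^4 * y^2 - 2256 * x^4 * y^2 * z - 11088 * x^4 * y^2 * z^2 - 14400 * x^4 * y^2 * z^3 - 204 * x^4 * y^3 - 2400 * x^4 * y^3 * z - 12320 * x^4 * y^3 * z^2 - 16000 * x^4 * y^3 * z^3 + 36 * x^4 * y^4 + 240 * x^4 * y^4 * z + 24 * x^4 * y^5 + 160 * x^4 * y^5 * z - 19 * x^5 - 336 * x^5 * z - 2784 * x^5 * z^2 - 7296 * x^5 * z^3 - 5856 * x^5 * z^4 - 41 * x^5 * y - 672 * x^5 * y * z - 8576 * x^5 * y * z^2 - 24320 * x^5 * y * z^3 - 19520 * x^5 * y * z^4 + 204 * x^5 * y^2 + 2016 * x^5 * y^2 * z + 3168 * x^5 * y^2 * z^2 + 216 * x^5 * y^3 + 2240 * x^5 * y^3 * z + 3520 * x^5 * y^3 * z^2 - 24 * x^5 * y^4 - 16 * x^5 * y^5 + 24 * x^6 + 408 * x^6 * z + 1296 * x^6 * z^2 + 1152 * x^6 * z^3 + 48 * x^6 * y + 1296 * x^6 * y * z + 4320 * x^6 * y * z^2 + 3840 * x^6 * y * z^3 - 144 * x^6 * y^2 - 288 * x^6 * y^2 * z - 160 * x^6 * y^3 - 320 * x^6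 * y^3 * z - 24 * x^7 - 96 * x^7 * z - 96 * x^7 * z^2 - 80 * x^7 * y - 320 * x^7 * y * z - 320 * x^7 * y * z^2 - w - 105 * w * z + w * z^2 - 162 * w * z^3 - 546 * w * z^4 - 392 * w * z^5 + 576 * w * z^6 - 1280 * w * z^7 - 3584 * w * z^8 - 2048 * w * z^9 - w * y - 84 * w * y * z + 282 * w * y * z^2 + 696 * w * y * z^3 + 1152 * w * y * z^4 + 3840 * w * y * z^5 + 7680 * w * y * z^6 + 6144 * w * y * z^7 - 3 * w * y^2 - 256 * w * y^2 * z + 374 * w * y^2 * z^2 + 776 * w * y^2 * z^3 + 1152 * w * y^2 * z^4 + 5376 * w * y^2 * z^5 + 12800 * w * y^2 * z^6 + 10240 * w * y^2 * z^7 - 3 * w * y^3 - 348 * w * y^3 * z - 288 * w * y^3 * z^2 - 1152 * w * y^3 * z^3 - 2304 * w * y^3 * z^4 - 3072 * w * y^3 * z^5 - 3 * w * y^4 - 290 * w * y^4 * z - 240 * w * y^4 * z^2 - 960 * w * y^4 * z^3 - 1920 * w * y^4 * z^4 - 2560 * w * y^4 * z^5 + 51 * w * x - 44 * w * x * z + 266 * w * x * z^2 + 1112 * w * x * z^3 + 980 * w * x * z^4 - 1344 * w * x * z^5 + 5760 * w * x * z^6 + 15360 * w * x * z^7 + 9216 * w * x * z^8 + 40 * w * x * y - 456 * w * x * y * z - 1188 * w * x * y * z^2 - 2880 * w * x * y * z^3 - 10752 * w * x * y * z^4 - 24576 * w * x * y * z^5 - 21504 * w * x * y * z^6 + 125 *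 w * x * y^2 - 664 * w * x * y^2 * z - 1404 * w * x * y^2 * z^2 - 3264 * w * x * y^2 * z^3 - 15360 * w * x * y^2 * z^4 - 40960 * w * x * y^2 * z^5 - 35840 * w * x * y^2 * z^6 + 174 * w * x * y^3 + 288 * w * x * y^3 * z + 1728 * w * x * y^3 * z^2 + 4608 * w * x * y^3 * z^3 + 7680 * w * x * y^3 * z^4 + 145 * w * x * y^4 + 240 * w * x * y^4 * z + 1440 * w * x * y^4 * z^2 + 3840 * w * x * y^4 * z^3 + 6400 * w * x * y^4 * z^4 + 21 * w * x^2 - 202 * w * x^2 * z - 838 * w * x^2 * z^2 - 1008 * w * x^2 * z^3 + 1104 * w * x^2 * z^4 - 10304 * w * x^2 * z^5 - 27392 * w * x^2 * z^6 - 17408 * w * x^2 * z^7 + 156 * w * x^2 * y + 492 * w * x^2 * y * z + 2448 * w * x^2 * y * z^2 + 11328 * w * x^2 * y * z^3 + 31488 * w * x^2 * y * z^4 + 30720 * w * x^2 * y * z^5 + 236 * w * x^2 * y^2 + 532 * w * x^2 * y^2 * z + 2928 * w * x^2 * y^2 * z^2 + 16320 * w * x^2 * y^2 * z^3 + 52480 * w * x^2 * y^2 * z^4 + 51200 * w * x^2 * y^2 * z^5 - 72 * w * x^2 * y^3 - 864 * w * x^2 * y^3 * z - 3456 * w * x^2 * y^3 * z^2 - 7680 * w * x^2 * y^3 * z^3 - 60 * w * x^2 * y^4 - 720 * w * x^2 * y^4 * z - 2880 * w * x^2 * y^4 * z^2 - 6400 * w * x^2 * y^4 * z^3 + 54 *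 w * x^3 + 248 * w * x^3 * z + 508 * w * x^3 * z^2 - 384 * w * x^3 * z^3 + 9568 * w * x^3 * z^4 + 26368 * w * x^3 * z^5 + 17920 * w * x^3 * z^6 - 36 * w * x^3 * y - 864 * w * x^3 * y * z - 5664 * w * x^3 * y * z^2 - 20736 * w * x^3 * y * z^3 - 23040 * w * x^3 * y * z^4 - 12 * w * x^3 * y^2 - 1056 * w * x^3 * y^2 * z - 8160 * w * x^3 * y^2 * z^2 - 34560 * w * x^3 * y^2 * z^3 - 38400 * w * x^3 * y^2 * z^4 + 144 * w * x^3 * y^3 + 1152 * w * x^3 * y^3 * z + 3840 * w * x^3 * y^3 * z^2 + 120 * w * x^3 * y^4 + 960 * w * x^3 * y^4 * z + 3200 * w * x^3 * y^4 * z^2 - 20 * w * x^4 - 134 * w * x^4 * z + 48 * w * x^4 * z^2 - 5024 * w * x^4 * z^3 - 14816 * w * x^4 * z^4 - 10880 * w * x^4 * z^5 + 108 * w * x^4 * y + 1344 * w * x^4 * y * z + 7392 * w * x^4 * y * z^2 + 9600 * w * x^4 * y * z^3 + 132 * w * x^4 * y^2 + 1920 * w * x^4 * y^2 * z + 12320 * w * x^4 * y^2 * z^2 + 16000 * w * x^4 * y^2 * z^3 - 144 * w * x^4 * y^3 - 960 * w * x^4 * y^3 * z - 120 * w * x^4 * y^4 - 800 * w * x^4 * y^4 * z + 17 * w * x^5 + 1504 * w * x^5 * z^2 + 4864 * w * x^5 * z^3 + 3904 * w * x^5 * z^4 - 120 * w * x^5 * y - 1344 * w * x^5 * y * z - 2112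 * w * x^5 * y * z^2 - 168 * w * x^5 * y^2 - 2240 * w * x^5 * y^2 * z - 3520 * w * x^5 * y^2 * z^2 + 96 * w * x^5 * y^3 + 80 * w * x^5 * y^4 - 240 * w * x^6 * z - 864 * w * x^6 * z^2 - 768 * w * x^6 * z^3 + 96 * w * x^6 * y + 192 * w * x^6 * y * z + 160 * w * x^6 * y^2 + 320 * w * x^6 * y^2 * z + 16 * w * x^7 + 64 * w * x^7 * z + 64 * w * x^7 * z^2)"
  using assms unfolding T5_def PA0_def PB0_def by algebra

lemma step0:
  fixes w x y z :: "'a::idom"
  assumes "w^2 = (1 + 2*z) * (x - z)"
  shows "PA0 (y + w) x y = PA1 x y z + w * PB1 x y z + 64 * (- z + 3 * z^3 + 3 * z^4 - 3 * y * z - 2 * y * z^2 + 10 * y * z^3 + 10 * y * z^4 - 5 * y^2 * z - 9 * y^2 * z^2 - 5 * y^3 * z - 10 * y^3 * z^2 + x - 2 * x * z - 7 * x * z^2 - 4 * x * z^3 + 2 * x * z^4 + 3 * x * y - 2 * x * y * z - 23 * x * y * z^2 - 20 * x * y * z^3 + 5 * x * y^2 + 6 * x * y^2 * z - 6 * x * y^2 * z^2 + 5 * x * y^3 + 10 * x * y^3 * z + x^2 + 3 * x^2 * z - x^2 * z^2 - 4 * x^2 * z^3 + 4 * x^2 * y + 13 * x^2 * y * z + 10 * x^2 * y * z^2 + 3 * x^2 * y^2 + 6 * x^2 * y^2 * z + x^3 + 2 * x^3 * z + 2 * x^3 * z^2 - w * z - w * z^2 + 2 * w * z^3 + 2 *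 w * z^4 - 3 * w * y * z - 6 * w * y * z^2 + 2 * w * y^2 - 5 * w * y^2 * z - 10 * w * y^2 * z^2 + 3 * w * y^3 + 2 * w * y^4 + w * x - 5 * w * x * z^2 - 4 * w * x * z^3 + 4 * w * x * y + 4 * w * x * y * z - 4 * w * x * y * z^2 + 6 * w * x * y^2 + 10 * w * x * y^2 * z + 2 * w * x * y^3 + w * x^2 + 3 * w * x^2 * z + 2 * w * x^2 * z^2 + 2 * w * x^2 * y + 4 * w * x^2 * y * z)"
  using assms unfolding PA0_def PA1_def PB1_def by algebra

lemma step1:
  fixes w x y z :: "'a::idom"
  assumes "w^2 = (1 + 2*z) * (x - z)"
  shows "PA1 (y + w) x y = PA2 x y z + w * PB2 x y z + 64 * (- z - z^2 + 3 * z^3 + 3 * z^4 - 2 * y * z + 10 * y * z^3 + 10 * y * z^4 + y^2 - 5 * y^2 * z - 9 * y^2 * z^2 - 5 * y^3 * z - 10 * y^3 * z^2 + x - x * z - 7 * x * z^2 - 4 * x * z^3 + 2 * x * z^4 + 2 * x * y - 4 * x * y * z - 23 * x * y * z^2 - 20 * x * y * z^3 + 5 * x * y^2 + 6 * x * y^2 * z - 6 * x * y^2 * z^2 + 5 * x * y^3 + 10 * x * y^3 * z + x^2 + 3 * x^2 * z - x^2 * z^2 - 4 * x^2 * z^3 + 4 * x^2 * y + 13 * x^2 * y * z + 10 * x^2 * y * z^2 + 3 * x^2 * y^2 + 6 * x^2 * y^2 * z + x^3 + 2 * x^3 * z + 2 * x^3 * z^2 - w * z + 2 * w * z^3 + 2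 * w * z^4 + 2 * w * y - 3 * w * y * z - 6 * w * y * z^2 + w * y^2 - 5 * w * y^2 * z - 10 * w * y^2 * z^2 + 3 * w * y^3 + 2 * w * y^4 + w * x - w * x * z - 5 * w * x * z^2 - 4 * w * x * z^3 + 4 * w * x * y + 4 * w * x * y * z - 4 * w * x * y * z^2 + 6 * w * x * y^2 + 10 * w * x * y^2 * z + 2 * w * x * y^3 + w * x^2 + 3 * w * x^2 * z + 2 * w * x^2 * z^2 + 2 * w * x^2 * y + 4 * w * x^2 * y * z)"
  using assms unfolding PA1_def PA2_def PB2_def by algebra

lemma step2:
  fixes w x y z :: "'a::idom"
  assumes "w^2 = (1 + 2*z) * (x - z)"
  shows "PA2 (y + w) x y = PA3 x y z + w * PB3 x y z + 64 * (- z - z^2 + 3 * z^3 + 3 * z^4 - 2 * y * z + 10 * y * z^3 + 10 * y * z^4 + y^2 - 5 * y^2 * z - 9 * y^2 * z^2 - 5 * y^3 * z - 10 * y^3 * z^2 + x - x * z - 7 * x * z^2 - 4 * x * z^3 + 2 * x * z^4 + 2 * x * y - 4 * x * y * z - 23 * x * y * z^2 - 20 * x * y * z^3 + 5 * x * y^2 + 6 * x * y^2 * z - 6 * x * y^2 * z^2 + 5 * x * y^3 + 10 * x * y^3 * z + x^2 + 3 * x^2 * z - x^2 * z^2 - 4 * x^2 * z^3 + 4 * x^2 * y + 13 * x^2 * y * z + 10 * x^2 * y * z^2 + 3 * x^2 * y^2 + 6 * x^2 * y^2 * z + x^3 + 2 * x^3 * z + 2 * x^3 * z^2 - w * z + 2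 * w * z^3 + 2 * w * z^4 + 2 * w * y - 3 * w * y * z - 6 * w * y * z^2 + w * y^2 - 5 * w * y^2 * z - 10 * w * y^2 * z^2 + 3 * w * y^3 + 2 * w * y^4 + w * x - w * x * z - 5 * w * x * z^2 - 4 * w * x * z^3 + 4 * w * x * y + 4 * w * x * y * z - 4 * w * x * y * z^2 + 6 * w * x * y^2 + 10 * w * x * y^2 * z + 2 * w * x * y^3 + w * x^2 + 3 * w * x^2 * z + 2 * w * x^2 * z^2 + 2 * w * x^2 * y + 4 * w * x^2 * y * z)"
  using assms unfolding PA2_def PA3_def PB3_def by algebra

lemma step3:
  fixes w x y z :: "'a::idom"
  assumes "w^2 = (1 + 2*z) * (x - z)"
  shows "PA3 (y + w) x y = PA3 x y z + w * PB3 x y z + 64 * (- z - z^2 + 3 * z^3 + 3 * z^4 - 2 * y * z + 10 * y * z^3 + 10 * y * z^4 + y^2 - 5 * y^2 * z - 9 * y^2 * z^2 - 5 * y^3 * z - 10 * y^3 * z^2 + x - x * z - 7 * x * z^2 - 4 * x * z^3 + 2 * x * z^4 + 2 * x * y - 4 * x * y * z - 23 * x * y * z^2 - 20 * x * y * z^3 + 5 * x * y^2 + 6 * x * y^2 * z - 6 * x * y^2 * z^2 + 5 * x * y^3 + 10 * x * y^3 * z + x^2 + 3 * x^2 * z - x^2 * z^2 - 4 * x^2 * z^3 + 4 * x^2 * y + 13 * x^2 * y * z + 10 * x^2 * y * z^2 + 3 * x^2 * y^2 + 6 * x^2 * y^2 * z + x^3 + 2 * x^3 * z + 2 * x^3 *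 z^2 - w * z + 2 * w * z^3 + 2 * w * z^4 + 2 * w * y - 3 * w * y * z - 6 * w * y * z^2 + w * y^2 - 5 * w * y^2 * z - 10 * w * y^2 * z^2 + 3 * w * y^3 + 2 * w * y^4 + w * x - w * x * z - 5 * w * x * z^2 - 4 * w * x * z^3 + 4 * w * x * y + 4 * w * x * y * z - 4 * w * x * y * z^2 + 6 * w * x * y^2 + 10 * w * x * y^2 * z + 2 * w * x * y^3 + w * x^2 + 3 * w * x^2 * z + 2 * w * x^2 * z^2 + 2 * w * x^2 * y + 4 * w * x^2 * y * z)"
  using assms unfolding PA3_def PA3_def PB3_def by algebra


definition integral :: "rat fps \<Rightarrow> bool" where "integral f \<longleftrightarrow> (\<forall>n. f $ n \<in> \<int>)"

lemma integral_add: "integral f \<Longrightarrow> integral g \<Longrightarrow> integral (f + g)"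
  unfolding integral_def by simp
lemma integral_diff: "integral f \<Longrightarrow> integral g \<Longrightarrow> integral (f - g)"
  unfolding integral_def by simp
lemma integral_minus: "integral f \<Longrightarrow> integral (- f)"
  unfolding integral_def by simp
lemma integral_mult: "integral f \<Longrightarrow> integral g \<Longrightarrow> integral (f * g)"
  unfolding integral_def fps_mult_nth by (auto intro!: Ints_sum Ints_mult)
lemma integral_1: "integral 1"
  unfolding integral_def by (simp add: fps_one_nth)
lemma integral_0: "integral 0"
  unfolding integral_def by simp
lemma integral_numeral: "integral (numeral k)"
  unfolding integral_def by (simp add: fps_numeral_nth)
lemma integral_power: "integral f \<Longrightarrow> integral (f ^ k)"
  by (induction k) (simp_all add: integral_1 integral_mult)
lemma integral_gen: "integral (gen A w)"
  unfolding integral_def gen_nth by simp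
lemma integral_dil: "integral f \<Longrightarrow> integral (dil f)"
  unfolding integral_def dil_nth by simp
lemma integral_U2: "integral f \<Longrightarrow> integral (U2 f)"
  unfolding integral_def U2_nth by simp

lemmas int_intros = integral_add integral_diff integral_minus integral_mult integral_1 integral_0
  integral_numeral integral_power integral_gen integral_dil integral_U2

lemma integral_inverse: assumes "integral g" "g $ 0 = 1" shows "integral (inverse g)"
proof -
  let ?f = "inverse g"
  have fg: "?f * g = 1" using assms(2) by (simp add: inverse_mult_eq_1)
  have "?f $ n \<in> \<int>" for n
  proof (induction n rule: less_induct)
    case (less n)
    show ?case
    proof (cases n)
      case 0 then show ?thesis using assms(2) by simp
    next
      case (Suc m)
      have "(?f * g) $ n = 0" using fg Suc by (simp add: fps_one_nth)
      then have "(\<Sum>i=0..m. ?f $ i * g $ (n - i)) + ?f $ n * g $ 0 = 0"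
        unfolding fps_mult_nth Suc by (simp add: sum.atLeast0_atMost_Suc)
      then have e: "?f $ n = - (\<Sum>i=0..m. ?f $ i * g $ (n - i))" using assms(2) by (simp add: eq_neg_iff_add_eq_0 add.commute)
      have "(\<Sum>i=0..m. ?f $ i * g $ (n - i)) \<in> \<int>"
        using less Suc assms(1) unfolding integral_def by (intro Ints_sum Ints_mult) auto
      then show ?thesis unfolding e by simp
    qed
  qed
  then show ?thesis unfolding integral_def by simp
qed

definition c64 :: "rat fps \<Rightarrow> rat fps \<Rightarrow> bool" where
  "c64 f g \<longleftrightarrow> (\<exists>h. integral h \<and> f - g = 64 * h)"

lemma c64I: "f = g + 64 * h \<Longrightarrow> integral h \<Longrightarrow> c64 f g"
  unfolding c64_def by auto
lemma c64_refl: "c64 f f"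
  unfolding c64_def by (intro exI[of _ 0]) (simp add: integral_0)
lemma c64_sym: "c64 f g \<Longrightarrow> c64 g f"
proof -
  assume "c64 f g"
  then obtain a where "integral a" "f - g = 64 * a" unfolding c64_def by blast
  then show ?thesis unfolding c64_def by (intro exI[of _ "- a"]) (auto simp: algebra_simps integral_minus)
qed
lemma c64_trans: "c64 f g \<Longrightarrow> c64 g h \<Longrightarrow> c64 f h"
proof -
  assume "c64 f g" "c64 g h"
  then obtain a b where "integral a" "f - g = 64 * a" "integral b" "g - h = 64 * b" unfolding c64_def by blast
  then show ?thesis unfolding c64_def by (intro exI[of _ "a + b"]) (auto simp: algebra_simps integral_add)
qed
lemma U2_64: "U2 (64 * h) = 64 * U2 h"
  using U2_dil_mult[of 64 h] by (simp add: dil_numeral)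
lemma c64_U2: "c64 f g \<Longrightarrow> c64 (U2 f) (U2 g)"
proof -
  assume "c64 f g"
  then obtain a where "integral a" "f - g = 64 * a" unfolding c64_def by blast
  then show ?thesis unfolding c64_def
    by (intro exI[of _ "U2 a"]) (auto simp: U2_diff[symmetric] U2_64 integral_U2)
qed


definition ss1 :: "rat fps" where "ss1 = dil sq"
definition ss2 :: "rat fps" where "ss2 = dil ss1"
definition ss3 :: "rat fps" where "ss3 = dil ss2"

lemma int_sq: "integral sq" unfolding sq_def by (rule integral_gen)
lemma int_ss1: "integral ss1" unfolding ss1_def by (intro integral_dil int_sq)
lemma int_ss2: "integral ss2" unfolding ss2_def by (intro integral_dil int_ss1)
lemma int_ss3: "integral ss3" unfolding ss3_def by (intro integral_dil int_ss2)
lemma int_od: "integral od" unfolding od_gen by (rule integral_gen)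

lemma rel2: "od^2 = (1 + 2 * ss3) * (ss1 - ss3)"
  using rel unfolding ss1_def ss2_def ss3_def .

lemma sq_split: "sq = ss2 + od"
  unfolding od_def ss2_def ss1_def by simp

lemma Th_t: "Th = 1 + 2 * (ss2 - od)"
  unfolding Th_eq ss2_def ss1_def by (simp add: algebra_simps)

lemma dTh_t: "dil Th = 1 + 2 * (2 * ss3 - ss1)"
proof -
  have "dil od = ss1 - ss3" unfolding od_def ss1_def ss2_def ss3_def by (simp only: dil_diff)
  then have "dil Th = 1 + 2 * ss3 - 2 * (ss1 - ss3)"
    unfolding Th_eq ss3_def ss2_def ss1_def by (simp only: dil_diff dil_add dil_mult dil_1 dil_numeral)
  then show ?thesis by (simp add: algebra_simps)
qed

lemma sq_nth0: "sq $ 0 = 0"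
proof -
  have "{k \<in> {k::int. 0 < k}. nat (k^2) = 0} = {}" by auto
  then show ?thesis unfolding sq_def gen_nth by (simp only: card.empty)
qed

lemma od_nth0: "od $ 0 = 0"
proof -
  have "{k \<in> {k::int. 0 < k \<and> odd k}. nat (k^2) = 0} = {}" by auto
  then show ?thesis unfolding od_gen gen_nth by (simp only: card.empty)
qed

lemma Th_nth0: "Th $ 0 = 1"
  unfolding Th_t ss2_def ss1_def using sq_nth0 od_nth0 by (simp add: dil_nth)

lemma dTh_nth0: "dil Th $ 0 = 1"
  using Th_nth0 by (simp add: dil_nth)

lemma int_Th: "integral Th" unfolding Th_t by (intro int_intros int_ss2 int_od)
lemma int_dTh: "integral (dil Th)" by (intro integral_dil int_Th)

lemma G_nth0: "((Th * dil Th) ^ 3) $ 0 = 1"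
  by (simp add: fps_nth_power_0 fps_mult_nth_0 Th_nth0 dTh_nth0)

lemma int_F: "integral btbar_gf"
  unfolding bt_formula by (intro integral_inverse G_nth0 int_intros int_Th int_dTh)

lemma T5_inv_ex: assumes "integral x" shows "\<exists>P. integral P \<and> (1 + 2 * x)^3 * T5 x = 1 + 64 * P"
  by (rule exI, rule conjI[OF _ T5_inv]) (intro int_intros assms)

lemma F_T5: "c64 btbar_gf (T5 (ss2 - od) * T5 (2 * ss3 - ss1))"
proof -
  let ?F = btbar_gf
  obtain Pa where Pa: "integral Pa" "(1 + 2 * (ss2 - od))^3 * T5 (ss2 - od) = 1 + 64 * Pa"
    using T5_inv_ex[of "ss2 - od"] int_ss2 int_od integral_diff by blast
  obtain Pb where Pb: "integral Pb" "(1 + 2 * (2 * ss3 - ss1))^3 * T5 (2 * ss3 - ss1) = 1 + 64 * Pb"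
    using T5_inv_ex[of "2 * ss3 - ss1"] int_ss3 int_ss1 by (blast intro: int_intros)
  have FG: "?F * (Th * dil Th) ^ 3 = 1"
    unfolding bt_formula using G_nth0 by (simp add: inverse_mult_eq_1)
  have "T5 (ss2 - od) * T5 (2 * ss3 - ss1) = (?F * (Th * dil Th) ^ 3) * (T5 (ss2 - od) * T5 (2 * ss3 - ss1))"
    using FG by simp
  also have "\<dots> = ?F * (((1 + 2 * (ss2 - od))^3 * T5 (ss2 - od)) * ((1 + 2 * (2 * ss3 - ss1))^3 * T5 (2 * ss3 - ss1)))"
    unfolding dTh_t unfolding Th_t by (simp only: power_mult_distrib ac_simps)
  also have "\<dots> = ?F + 64 * (?F * (Pa + Pb + 64 * Pa * Pb))"
    unfolding Pa(2) Pb(2) by (simp add: algebra_simps)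
  finally have "T5 (ss2 - od) * T5 (2 * ss3 - ss1) = ?F + 64 * (?F * (Pa + Pb + 64 * Pa * Pb))" .
  then have "c64 (T5 (ss2 - od) * T5 (2 * ss3 - ss1)) ?F"
    by (rule c64I) (intro int_intros int_F Pa(1) Pb(1))
  then show ?thesis by (rule c64_sym)
qed

lemma F_Q0: "c64 btbar_gf (PA0 ss1 ss2 ss3 + od * PB0 ss1 ss2 ss3)"
proof -
  have "c64 (T5 (ss2 - od) * T5 (2 * ss3 - ss1)) (PA0 ss1 ss2 ss3 + od * PB0 ss1 ss2 ss3)"
    by (rule c64I[OF step_init[OF rel2]]) (intro int_intros int_ss1 int_ss2 int_ss3 int_od)
  then show ?thesis by (rule c64_trans[OF F_T5])
qed

lemma dil_PA0: "dil (PA0 x y z) = PA0 (dil x) (dil y) (dil z)"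
  unfolding PA0_def by (simp only: dil_add dil_diff dil_mult dil_power dil_numeral dil_1 dil_minus)
lemma dil_PB0: "dil (PB0 x y z) = PB0 (dil x) (dil y) (dil z)"
  unfolding PB0_def by (simp only: dil_add dil_diff dil_mult dil_power dil_numeral dil_1 dil_minus)
lemma U2_Q0: "U2 (PA0 ss1 ss2 ss3 + od * PB0 ss1 ss2 ss3) = PA0 sq ss1 ss2"
proof -
  have a: "PA0 ss1 ss2 ss3 = dil (PA0 sq ss1 ss2)" unfolding dil_PA0 ss3_def ss2_def ss1_def ..
  have b: "od * PB0 ss1 ss2 ss3 = dil (PB0 sq ss1 ss2) * od" unfolding dil_PB0 ss3_def ss2_def ss1_def by (rule mult.commute)
  show ?thesis unfolding U2_add a b U2_dil U2_dil_mult U2_od by simp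
qed
lemma stepc0: "c64 (PA0 sq ss1 ss2) (PA1 ss1 ss2 ss3 + od * PB1 ss1 ss2 ss3)"
  unfolding sq_split
  by (rule c64I[OF step0[OF rel2]]) (intro int_intros int_ss1 int_ss2 int_ss3 int_od)

lemma dil_PA1: "dil (PA1 x y z) = PA1 (dil x) (dil y) (dil z)"
  unfolding PA1_def by (simp only: dil_add dil_diff dil_mult dil_power dil_numeral dil_1 dil_minus)
lemma dil_PB1: "dil (PB1 x y z) = PB1 (dil x) (dil y) (dil z)"
  unfolding PB1_def by (simp only: dil_add dil_diff dil_mult dil_power dil_numeral dil_1 dil_minus)
lemma U2_Q1: "U2 (PA1 ss1 ss2 ss3 + od * PB1 ss1 ss2 ss3) = PA1 sq ss1 ss2"
proof -
  have a: "PA1 ss1 ss2 ss3 = dil (PA1 sq ss1 ss2)" unfolding dil_PA1 ss3_def ss2_def ss1_def ..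
  have b: "od * PB1 ss1 ss2 ss3 = dil (PB1 sq ss1 ss2) * od" unfolding dil_PB1 ss3_def ss2_def ss1_def by (rule mult.commute)
  show ?thesis unfolding U2_add a b U2_dil U2_dil_mult U2_od by simp
qed
lemma stepc1: "c64 (PA1 sq ss1 ss2) (PA2 ss1 ss2 ss3 + od * PB2 ss1 ss2 ss3)"
  unfolding sq_split
  by (rule c64I[OF step1[OF rel2]]) (intro int_intros int_ss1 int_ss2 int_ss3 int_od)

lemma dil_PA2: "dil (PA2 x y z) = PA2 (dil x) (dil y) (dil z)"
  unfolding PA2_def by (simp only: dil_add dil_diff dil_mult dil_power dil_numeral dil_1 dil_minus)
lemma dil_PB2: "dil (PB2 x y z) = PB2 (dil x) (dil y) (dil z)"
  unfolding PB2_def by (simp only: dil_add dil_diff dil_mult dil_power dil_numeral dil_1 dil_minus)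
lemma U2_Q2: "U2 (PA2 ss1 ss2 ss3 + od * PB2 ss1 ss2 ss3) = PA2 sq ss1 ss2"
proof -
  have a: "PA2 ss1 ss2 ss3 = dil (PA2 sq ss1 ss2)" unfolding dil_PA2 ss3_def ss2_def ss1_def ..
  have b: "od * PB2 ss1 ss2 ss3 = dil (PB2 sq ss1 ss2) * od" unfolding dil_PB2 ss3_def ss2_def ss1_def by (rule mult.commute)
  show ?thesis unfolding U2_add a b U2_dil U2_dil_mult U2_od by simp
qed
lemma stepc2: "c64 (PA2 sq ss1 ss2) (PA3 ss1 ss2 ss3 + od * PB3 ss1 ss2 ss3)"
  unfolding sq_split
  by (rule c64I[OF step2[OF rel2]]) (intro int_intros int_ss1 int_ss2 int_ss3 int_od)

lemma dil_PA3: "dil (PA3 x y z) = PA3 (dil x) (dil y) (dil z)"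
  unfolding PA3_def by (simp only: dil_add dil_diff dil_mult dil_power dil_numeral dil_1 dil_minus)
lemma dil_PB3: "dil (PB3 x y z) = PB3 (dil x) (dil y) (dil z)"
  unfolding PB3_def by (simp only: dil_add dil_diff dil_mult dil_power dil_numeral dil_1 dil_minus)
lemma U2_Q3: "U2 (PA3 ss1 ss2 ss3 + od * PB3 ss1 ss2 ss3) = PA3 sq ss1 ss2"
proof -
  have a: "PA3 ss1 ss2 ss3 = dil (PA3 sq ss1 ss2)" unfolding dil_PA3 ss3_def ss2_def ss1_def ..
  have b: "od * PB3 ss1 ss2 ss3 = dil (PB3 sq ss1 ss2) * od" unfolding dil_PB3 ss3_def ss2_def ss1_def by (rule mult.commute)
  show ?thesis unfolding U2_add a b U2_dil U2_dil_mult U2_od by simp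
qed
lemma stepc3: "c64 (PA3 sq ss1 ss2) (PA3 ss1 ss2 ss3 + od * PB3 ss1 ss2 ss3)"
  unfolding sq_split
  by (rule c64I[OF step3[OF rel2]]) (intro int_intros int_ss1 int_ss2 int_ss3 int_od)

lemma chain: "c64 (U2 (U2 (U2 (U2 btbar_gf)))) (U2 (U2 (U2 btbar_gf)))"
proof -
  have g1: "c64 (U2 btbar_gf) (PA1 ss1 ss2 ss3 + od * PB1 ss1 ss2 ss3)"
    using c64_trans[OF c64_U2[OF F_Q0] stepc0[folded U2_Q0]] .
  have g2: "c64 (U2 (U2 btbar_gf)) (PA2 ss1 ss2 ss3 + od * PB2 ss1 ss2 ss3)"
    using c64_trans[OF c64_U2[OF g1] stepc1[folded U2_Q1]] .
  have g3: "c64 (U2 (U2 (U2 btbar_gf))) (PA3 ss1 ss2 ss3 + od * PB3 ss1 ss2 ss3)"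
    using c64_trans[OF c64_U2[OF g2] stepc2[folded U2_Q2]] .
  have g4: "c64 (U2 (U2 (U2 (U2 btbar_gf)))) (PA3 ss1 ss2 ss3 + od * PB3 ss1 ss2 ss3)"
    using c64_trans[OF c64_U2[OF g3] stepc3[folded U2_Q3]] .
  show ?thesis by (rule c64_trans[OF g4 c64_sym[OF g3]])
qed

lemma part1: "\<exists>k::int. btbar (16 * n) - btbar (8 * n) = of_int (64 * k)"
proof -
  obtain h where h: "integral h" "U2 (U2 (U2 (U2 btbar_gf))) - U2 (U2 (U2 btbar_gf)) = 64 * h"
    using chain unfolding c64_def by blast
  have "(U2 (U2 (U2 (U2 btbar_gf))) - U2 (U2 (U2 btbar_gf))) $ n = (64 * h) $ n" using h(2) by simp
  then have e: "btbar (16 * n) - btbar (8 * n) = 64 * h $ n"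
    by (simp add: U2_nth btbar_def fps_numeral_nth mult.assoc[symmetric] fps_mult_nth sum.atLeast_Suc_atMost)
  obtain k where "h $ n = of_int k" using h(1) unfolding integral_def by (meson Ints_cases)
  then show ?thesis using e by (intro exI[of _ k]) simp
qed


theorem mainTheorem6:
  shows "(\<forall>n::nat. \<exists>k::int. btbar (16 * n) - btbar (8 * n) = of_int (64 * k))
       \<and> (\<forall>n alpha::nat. \<exists>k::int. btbar (2 ^ (alpha + 3) * n) - btbar (8 * n) = of_int (64 * k))"
proof
  show "\<forall>n::nat. \<exists>k::int. btbar (16 * n) - btbar (8 * n) = of_int (64 * k)"
    using part1 by blast
  have "\<forall>n::nat. \<exists>k::int. btbar (2 ^ (alpha + 3) * n) - btbar (8 * n) = of_int (64 * k)" for alpha :: nat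
  proof (induction alpha)
    case 0
    show ?case by (intro allI exI[of _ 0]) simp
  next
    case (Suc a)
    show ?case
    proof
      fix n :: nat
      obtain k1 :: int where k1: "btbar (2 ^ (a + 3) * n) - btbar (8 * n) = of_int (64 * k1)"
        using Suc by blast
      obtain k2 :: int where k2: "btbar (16 * (2 ^ a * n)) - btbar (8 * (2 ^ a * n)) = of_int (64 * k2)"
        using part1 by blast
      have e1: "16 * (2 ^ a * n) = 2 ^ (Suc a + 3) * n" by (simp add: power_add)
      have e2: "8 * (2 ^ a * n) = 2 ^ (a + 3) * n" by (simp add: power_add)
      have "btbar (2 ^ (Suc a + 3) * n) - btbar (8 * n) = of_int (64 * (k1 + k2))"
        using k1 k2 unfolding e1 e2 by (simp add: algebra_simps)
      then show "\<exists>k::int. btbar (2 ^ (Suc a + 3) * n) - btbar (8 * n) = of_int (64 * k)" by blast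
    qed
  qed
  then show "\<forall>n alpha::nat. \<exists>k::int. btbar (2 ^ (alpha + 3) * n) - btbar (8 * n) = of_int (64 * k)"
    by blast
qed

end
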